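(* Let $\tilde{\mathfrak{g}}$ be a real solvable Lie algebra with a metric $\langle,\rangle$ and a pseudo-Iwasawa decomposition $\tilde{\mathfrak{g}}=\mathfrak{g}\oplus^\perp\mathfrak{a}$. Let $H\in\tilde{\mathfrak g}$ be defined by $\langle H,v\rangle=\operatorname{Tr}(\operatorname{ad}v)$ for all $v\in\tilde{\mathfrak g}$. Then the Einstein equation $\widetilde{\operatorname{Ric}}=\lambda\,\mathrm{id}$ holds on $\tilde{\mathfrak{g}}$ if and only if (1) $\mathfrak{g}$ with the induced metric satisfies $\operatorname{Ric}=\lambda\,\mathrm{id}+D$, where $D=\operatorname{ad}H|_{\mathfrak g}$; and (2) $\operatorname{Tr}(\operatorname{ad}X\circ\operatorname{ad}Y)=-\lambda\langle X,Y\rangle$ for all $X,Y\in\mathfrak{a}$. In this case $\operatorname{Tr}D^2=-\lambda\operatorname{Tr}D$.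
   Context: A metric on a Lie algebra is a nondegenerate symmetric bilinear form, possibly indefinite; $\widetilde{\operatorname{Ric}}$ and $\operatorname{Ric}$ denote the Ricci operators of the corresponding left-invariant pseudo-Riemannian metrics on the simply connected Lie groups. A standard decomposition of a metric Lie algebra $\tilde{\mathfrak g}$ is a decomposition $\tilde{\mathfrak{g}}=\mathfrak{g}\oplus^\perp\mathfrak{a}$ as an orthogonal direct sum of vector spaces, where $\mathfrak{g}$ is a nilpotent ideal and $\mathfrak{a}$ is an abelian subalgebra. It is pseudo-Iwasawa if moreover $\operatorname{ad}X$ is self-adjoint with respect to $\langle,\rangle$ for every $X\in\mathfrak{a}$. *)

theory Defs
  imports "HOL-Analysis.Analysis"
begin

text \<open>A finite-dimensional real vector space is modelled by a type of class euclidean_space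
(its built-in inner product is NOT used). The Lie bracket br and the metric m are
bilinear maps on the whole ambient space; sub-Lie algebras are given by subspaces V.\<close>

definition lie_algebra :: "('a::euclidean_space \<Rightarrow> 'a \<Rightarrow> 'a) \<Rightarrow> bool" where
  "lie_algebra br \<longleftrightarrow> bilinear br \<and> (\<forall>x y. br x y = - br y x) \<and>
     (\<forall>x y z. br x (br y z) + br y (br z x) + br z (br x y) = 0)"

definition metric :: "('a::euclidean_space \<Rightarrow> 'a \<Rightarrow> real) \<Rightarrow> bool" where
  "metric m \<longleftrightarrow> bilinear m \<and> (\<forall>x y. m x y = m y x) \<and>
     (\<forall>x. (\<forall>y. m x y = 0) \<longrightarrow> x = 0)"

fun derived_series :: "('a::euclidean_space \<Rightarrow> 'a \<Rightarrow> 'a) \<Rightarrow> nat \<Rightarrow> 'a set" where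
  "derived_series br 0 = UNIV"
| "derived_series br (Suc k) =
     span {br x y | x y. x \<in> derived_series br k \<and> y \<in> derived_series br k}"

definition solvable :: "('a::euclidean_space \<Rightarrow> 'a \<Rightarrow> 'a) \<Rightarrow> bool" where
  "solvable br \<longleftrightarrow> (\<exists>k. derived_series br k = {0})"

fun lower_central :: "'a::euclidean_space set \<Rightarrow> ('a \<Rightarrow> 'a \<Rightarrow> 'a) \<Rightarrow> nat \<Rightarrow> 'a set" where
  "lower_central V br 0 = V"
| "lower_central V br (Suc k) =
     span {br x y | x y. x \<in> V \<and> y \<in> lower_central V br k}"

definition nilpotent_on :: "'a::euclidean_space set \<Rightarrow> ('a \<Rightarrow> 'a \<Rightarrow> 'a) \<Rightarrow> bool" where
  "nilpotent_on V br \<longleftrightarrow> (\<exists>k. lower_central V br k = {0})"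

definition lie_ideal :: "'a::euclidean_space set \<Rightarrow> ('a \<Rightarrow> 'a \<Rightarrow> 'a) \<Rightarrow> bool" where
  "lie_ideal V br \<longleftrightarrow> subspace V \<and> (\<forall>x y. y \<in> V \<longrightarrow> br x y \<in> V)"

definition abelian_subalgebra :: "'a::euclidean_space set \<Rightarrow> ('a \<Rightarrow> 'a \<Rightarrow> 'a) \<Rightarrow> bool" where
  "abelian_subalgebra A br \<longleftrightarrow> subspace A \<and> (\<forall>x\<in>A. \<forall>y\<in>A. br x y = 0)"

text \<open>Standard decomposition g~ = g (+)^perp a (the ambient space is g~ = UNIV).\<close>
definition standard_decomposition ::
  "('a::euclidean_space \<Rightarrow> 'a \<Rightarrow> 'a) \<Rightarrow> ('a \<Rightarrow> 'a \<Rightarrow> real) \<Rightarrow> 'a set \<Rightarrow> 'a set \<Rightarrow> bool" where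
  "standard_decomposition br m g a \<longleftrightarrow>
     lie_ideal g br \<and> nilpotent_on g br \<and> abelian_subalgebra a br \<and>
     g \<inter> a = {0} \<and> (\<forall>v. \<exists>x\<in>g. \<exists>y\<in>a. v = x + y) \<and>
     (\<forall>x\<in>g. \<forall>y\<in>a. m x y = 0)"

definition pseudo_iwasawa ::
  "('a::euclidean_space \<Rightarrow> 'a \<Rightarrow> 'a) \<Rightarrow> ('a \<Rightarrow> 'a \<Rightarrow> real) \<Rightarrow> 'a set \<Rightarrow> 'a set \<Rightarrow> bool" where
  "pseudo_iwasawa br m g a \<longleftrightarrow> standard_decomposition br m g a \<and>
     (\<forall>X\<in>a. \<forall>u v. m (br X u) v = m u (br X v))"

text \<open>Trace of an endomorphism f of a subspace V, computed in some basis of V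
(basis-independent).\<close>
definition trace_on :: "'a::euclidean_space set \<Rightarrow> ('a \<Rightarrow> 'a) \<Rightarrow> real" where
  "trace_on V f = (let B = (SOME B. B \<subseteq> V \<and> independent B \<and> span B = span V)
                   in \<Sum>b\<in>B. representation B (f b) b)"

text \<open>Levi-Civita connection of the left-invariant metric on the Lie algebra (V, br, m)
(Koszul formula): 2<nabla_x y, w> = <[x,y],w> - <[y,w],x> + <[w,x],y>.\<close>
definition lc_conn ::
  "'a::euclidean_space set \<Rightarrow> ('a \<Rightarrow> 'a \<Rightarrow> 'a) \<Rightarrow> ('a \<Rightarrow> 'a \<Rightarrow> real) \<Rightarrow> 'a \<Rightarrow> 'a \<Rightarrow> 'a" where
  "lc_conn V br m x y = (THE z. z \<in> V \<and>
     (\<forall>w\<in>V. 2 * m z w = m (br x y) w - m (br y w) x + m (br w x) y))"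

definition curv ::
  "'a::euclidean_space set \<Rightarrow> ('a \<Rightarrow> 'a \<Rightarrow> 'a) \<Rightarrow> ('a \<Rightarrow> 'a \<Rightarrow> real) \<Rightarrow> 'a \<Rightarrow> 'a \<Rightarrow> 'a \<Rightarrow> 'a" where
  "curv V br m x y z = lc_conn V br m x (lc_conn V br m y z) - lc_conn V br m y (lc_conn V br m x z)
                       - lc_conn V br m (br x y) z"

definition ricci_tensor ::
  "'a::euclidean_space set \<Rightarrow> ('a \<Rightarrow> 'a \<Rightarrow> 'a) \<Rightarrow> ('a \<Rightarrow> 'a \<Rightarrow> real) \<Rightarrow> 'a \<Rightarrow> 'a \<Rightarrow> real" where
  "ricci_tensor V br m x y = trace_on V (\<lambda>z. curv V br m z x y)"

definition ricci_op ::
  "'a::euclidean_space set \<Rightarrow> ('a \<Rightarrow> 'a \<Rightarrow> 'a) \<Rightarrow> ('a \<Rightarrow> 'a \<Rightarrow> real) \<Rightarrow> 'a \<Rightarrow> 'a" where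
  "ricci_op V br m x = (THE r. r \<in> V \<and> (\<forall>y\<in>V. m r y = ricci_tensor V br m x y))"

end

theory Submission
  imports Defs
begin

section \<open>Traces via representations\<close>

definition rtr :: "'a::euclidean_space set \<Rightarrow> ('a \<Rightarrow> 'a) \<Rightarrow> real" where
  "rtr B f = (\<Sum>b\<in>B. representation B (f b) b)"

lemma rep_lin:
  assumes "independent B" "finite I" "\<And>i. i \<in> I \<Longrightarrow> v i \<in> span B"
  shows "representation B (\<Sum>i\<in>I. c i *\<^sub>R v i) b = (\<Sum>i\<in>I. c i * representation B (v i) b)"
proof -
  have "representation B (\<Sum>i\<in>I. c i *\<^sub>R v i) b = (\<Sum>i\<in>I. representation B (c i *\<^sub>R v i) b)"
    using real_vector.representation_sum[of B I "\<lambda>i. c i *\<^sub>R v i"] assms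
    by (simp add: real_vector.span_scale)
  also have "\<dots> = (\<Sum>i\<in>I. c i * representation B (v i) b)"
    using assms by (simp add: real_vector.representation_scale)
  finally show ?thesis .
qed

lemma rtr_invariant:
  assumes iB: "independent B" and iC: "independent C" and sp: "span B = span C"
    and lf: "linear f" and fV: "\<And>v. v \<in> span B \<Longrightarrow> f v \<in> span B"
  shows "rtr B f = rtr C f"
proof -
  have fB: "finite B" and fC: "finite C" using iB iC by (auto intro: finiteI_independent)
  have BsB: "b \<in> span B" if "b \<in> B" for b using that by (simp add: span_base)
  have CsB: "c \<in> span B" if "c \<in> C" for c using that sp by (simp add: span_base)
  have 1: "representation B (f b) b = (\<Sum>c\<in>C. representation C (f b) c * representation B c b)"
    if "b \<in> B" for b
  proof -
    have "f b \<in> span C" using fV[OF BsB[OF that]] sp by simp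
    then have "f b = (\<Sum>c\<in>C. representation C (f b) c *\<^sub>R c)"
      using real_vector.sum_representation_eq[OF iC _ fC] by simp
    then have "representation B (f b) b = representation B (\<Sum>c\<in>C. representation C (f b) c *\<^sub>R c) b"
      by simp
    also have "\<dots> = (\<Sum>c\<in>C. representation C (f b) c * representation B c b)"
      by (rule rep_lin[OF iB fC CsB])
    finally show ?thesis .
  qed
  have 2: "representation C (f c) c = (\<Sum>b\<in>B. representation B c b * representation C (f b) c)"
    if "c \<in> C" for c
  proof -
    have "c = (\<Sum>b\<in>B. representation B c b *\<^sub>R b)"
      using real_vector.sum_representation_eq[OF iB CsB[OF that] fB] by simp
    then have "f c = f (\<Sum>b\<in>B. representation B c b *\<^sub>R b)" by simp
    also have "\<dots> = (\<Sum>b\<in>B. representation B c b *\<^sub>R f b)"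
      using lf by (simp add: linear_sum linear_scale)
    finally have "representation C (f c) c = representation C (\<Sum>b\<in>B. representation B c b *\<^sub>R f b) c"
      by simp
    also have "\<dots> = (\<Sum>b\<in>B. representation B c b * representation C (f b) c)"
      by (rule rep_lin[OF iC fB]) (metis BsB fV sp)
    finally show ?thesis .
  qed
  have "rtr B f = (\<Sum>b\<in>B. \<Sum>c\<in>C. representation C (f b) c * representation B c b)"
    unfolding rtr_def using 1 by simp
  also have "\<dots> = (\<Sum>c\<in>C. \<Sum>b\<in>B. representation C (f b) c * representation B c b)"
    by (rule sum.swap)
  also have "\<dots> = (\<Sum>c\<in>C. \<Sum>b\<in>B. representation B c b * representation C (f b) c)"
    by (intro sum.cong refl) (rule mult.commute)
  also have "\<dots> = rtr C f"
    unfolding rtr_def using 2 by simp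
  finally show ?thesis .
qed

lemma trace_on_some:
  "trace_on V f = rtr (SOME B. B \<subseteq> V \<and> independent B \<and> span B = span V) f"
  unfolding trace_on_def rtr_def Let_def by (rule refl)

lemma trace_on_rtr:
  assumes V: "subspace V" and iB: "independent B" and BV: "span B = V"
    and lf: "linear f" and fV: "\<And>v. v \<in> V \<Longrightarrow> f v \<in> V"
  shows "trace_on V f = rtr B f"
proof -
  let ?P = "\<lambda>B. B \<subseteq> V \<and> independent B \<and> span B = span V"
  have sV: "span V = V" using V by (simp only: span_eq_iff)
  have ex: "\<exists>B. ?P B"
  proof -
    obtain B' where b1: "B' \<subseteq> V" and b2: "independent B'" and b3: "V \<subseteq> span B'"
      using real_vector.basis_exists[of V] by metis
    have "span B' = V" by (rule real_vector.span_subspace) fact+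
    then have "span B' = span V" by (simp only: sV)
    then show ?thesis using b1 b2 by blast
  qed
  obtain B0 where B0: "B0 = (SOME B. ?P B)" by blast
  have P0: "?P B0" unfolding B0 using someI_ex[OF ex] .
  have "trace_on V f = rtr B0 f" unfolding B0 by (rule trace_on_some)
  also have "\<dots> = rtr B f"
  proof (rule rtr_invariant)
    show "span B0 = span B" using P0 BV sV by simp
    show "v \<in> span B0 \<Longrightarrow> f v \<in> span B0" for v using P0 sV fV by simp
    show "independent B0" using P0 by simp
  qed (rule iB, rule lf)
  finally show ?thesis .
qed

lemma trace_restrict:
  assumes V: "subspace V" and W: "subspace W" and WV: "W \<subseteq> V"
    and lf: "linear f" and fVW: "\<And>v. v \<in> V \<Longrightarrow> f v \<in> W"
  shows "trace_on V f = trace_on W f"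
proof -
  obtain BW where bw1: "BW \<subseteq> W" and bw2: "independent BW" and bw3: "W \<subseteq> span BW"
    using real_vector.basis_exists[of W] by metis
  have "BW \<subseteq> V" using bw1 WV by auto
  then obtain B where b0: "BW \<subseteq> B" and b1: "B \<subseteq> V" and b2: "independent B" and b3: "V \<subseteq> span B"
    using real_vector.maximal_independent_subset_extend[of BW V] bw2 by metis
  have sBW: "span BW = W" by (rule real_vector.span_subspace) fact+
  have sB: "span B = V" by (rule real_vector.span_subspace) fact+
  have fB: "finite B" using b2 by (rule finiteI_independent)
  have "trace_on V f = rtr B f" by (rule trace_on_rtr[OF V b2 sB lf]) (use fVW WV in auto)
  also have "\<dots> = (\<Sum>b\<in>B. representation BW (f b) b)"
    unfolding rtr_def
  proof (rule sum.cong[OF refl])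
    fix b assume "b \<in> B"
    then have "f b \<in> span BW" using fVW b1 sBW by auto
    then show "representation B (f b) b = representation BW (f b) b"
      using real_vector.representation_extend[OF b2 _ b0] by simp
  qed
  also have "\<dots> = (\<Sum>b\<in>BW. representation BW (f b) b)"
  proof (rule sum.mono_neutral_right[OF fB b0])
    show "\<forall>i\<in>B - BW. representation BW (f i) i = 0"
      by (metis DiffD2 real_vector.representation_ne_zero)
  qed
  also have "\<dots> = trace_on W f"
    unfolding rtr_def[symmetric] by (rule trace_on_rtr[OF W bw2 sBW lf, symmetric]) (use fVW WV in auto)
  finally show ?thesis .
qed

lemma trace_nilpotent:
  fixes f :: "'a::euclidean_space \<Rightarrow> 'a"
  assumes "subspace V" "linear f" "\<And>v. v \<in> V \<Longrightarrow> f v \<in> V" "\<And>v. v \<in> V \<Longrightarrow> (f ^^ k) v = 0"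
  shows "trace_on V f = 0"
  using assms
proof (induction "dim V" arbitrary: V rule: less_induct)
  case less
  show ?case
  proof (cases "V = {0}")
    case True
    have "trace_on V f = rtr {} f"
      by (rule trace_on_rtr[OF less.prems(1) _ _ less.prems(2)]) (use True less.prems(3) real_vector.independent_empty in auto)
    then show ?thesis by (simp add: rtr_def)
  next
    case False
    define W where "W = f ` V"
    have W: "subspace W" unfolding W_def by (rule linear_subspace_image[OF less.prems(2) less.prems(1)])
    have WV: "W \<subseteq> V" unfolding W_def using less.prems(3) by auto
    have pow: "(f ^^ j) ` V = V" if "W = V" for j
    proof (induction j)
      case 0 show ?case by simp
    next
      case (Suc j)
      have "(f ^^ Suc j) ` V = (f ^^ j) ` (f ` V)" by (simp only: funpow_Suc_right image_comp)
      also have "\<dots> = V" using that Suc unfolding W_def by simp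
      finally show ?case .
    qed
    have "W \<noteq> V"
    proof
      assume "W = V"
      then have "V = (f ^^ k) ` V" using pow by simp
      also have "\<dots> \<subseteq> {0}" using less.prems(4) by auto
      finally show False using False less.prems(1) by (auto simp: subspace_def)
    qed
    then have "W \<subset> V" using WV by auto
    moreover have sW: "span W = W" and sV: "span V = V" using W less.prems(1) by (simp_all only: span_eq_iff)
    ultimately have "dim W < dim V" using dim_psubset[of W V] unfolding sW sV by blast
    moreover have "trace_on W f = 0"
    proof (rule less.hyps)
      show "dim W < dim V" by fact
      show "subspace W" by fact
      show "linear f" by fact
      show "f v \<in> W" if "v \<in> W" for v using that WV unfolding W_def by auto
      show "(f ^^ k) v = 0" if "v \<in> W" for v using that WV less.prems(4) by auto
    qed
    moreover have "trace_on V f = trace_on W f"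
      by (rule trace_restrict[OF less.prems(1) W WV less.prems(2)]) (simp add: W_def)
    ultimately show ?thesis by simp
  qed
qed

section \<open>Dual frames for a symmetric bilinear form\<close>

definition frame :: "('a::euclidean_space \<Rightarrow> 'a \<Rightarrow> real) \<Rightarrow> 'a set \<Rightarrow> 'a set \<Rightarrow> ('a \<Rightarrow> 'a) \<Rightarrow> bool" where
  "frame m V B d \<longleftrightarrow> finite B \<and> B \<subseteq> V \<and> (\<forall>b\<in>B. d b \<in> V) \<and>
     (\<forall>b\<in>B. \<forall>c\<in>B. m b (d c) = (if b = c then 1 else 0)) \<and> V \<subseteq> span B"

definition ndeg :: "('a::euclidean_space \<Rightarrow> 'a \<Rightarrow> real) \<Rightarrow> 'a set \<Rightarrow> bool" where
  "ndeg m V \<longleftrightarrow> (\<forall>x\<in>V. (\<forall>y\<in>V. m x y = 0) \<longrightarrow> x = 0)"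

locale bil =
  fixes m :: "'a::euclidean_space \<Rightarrow> 'a \<Rightarrow> real"
  assumes bm: "bilinear m" and sm: "\<And>x y. m x y = m y x"
begin

lemma m_lin_l: "linear (\<lambda>x. m x y)" using bm by (simp add: bilinear_def)
lemma m_lin_r: "linear (m x)" using bm by (simp add: bilinear_def)

lemma m_add_l[simp]: "m (x + y) z = m x z + m y z" using linear_add[OF m_lin_l] by simp
lemma m_add_r[simp]: "m z (x + y) = m z x + m z y" using linear_add[OF m_lin_r] by simp
lemma m_diff_l[simp]: "m (x - y) z = m x z - m y z" using linear_diff[OF m_lin_l] by simp
lemma m_diff_r[simp]: "m z (x - y) = m z x - m z y" using linear_diff[OF m_lin_r] by simp
lemma m_scale_l[simp]: "m (c *\<^sub>R x) z = c * m x z" using linear_scale[OF m_lin_l] by simp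
lemma m_scale_r[simp]: "m z (c *\<^sub>R x) = c * m z x" using linear_scale[OF m_lin_r] by simp
lemma m_neg_l[simp]: "m (- x) z = - m x z" using linear_neg[OF m_lin_l] by simp
lemma m_neg_r[simp]: "m z (- x) = - m z x" using linear_neg[OF m_lin_r] by simp
lemma m_zero_l[simp]: "m 0 z = 0" using linear_0[OF m_lin_l] by simp
lemma m_zero_r[simp]: "m z 0 = 0" using linear_0[OF m_lin_r] by simp
lemma m_sum_l: "m (\<Sum>i\<in>I. f i) z = (\<Sum>i\<in>I. m (f i) z)" using linear_sum[OF m_lin_l] by simp
lemma m_sum_r: "m z (\<Sum>i\<in>I. f i) = (\<Sum>i\<in>I. m z (f i))" using linear_sum[OF m_lin_r] by simp

lemma coef:
  assumes "frame m V B d" "c \<in> B"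
  shows "m (\<Sum>b\<in>B. u b *\<^sub>R b) (d c) = u c"
proof -
  have "m (\<Sum>b\<in>B. u b *\<^sub>R b) (d c) = (\<Sum>b\<in>B. u b * m b (d c))" by (simp add: m_sum_l)
  also have "\<dots> = (\<Sum>b\<in>B. if b = c then u b else 0)"
    using assms unfolding frame_def by (intro sum.cong refl) auto
  also have "\<dots> = u c" using assms unfolding frame_def by simp
  finally show ?thesis .
qed

lemma frame_indep:
  assumes fr: "frame m V B d" shows "independent B"
proof
  assume "dependent B"
  moreover have fin: "finite B" using fr by (simp add: frame_def)
  ultimately obtain u v where v: "v \<in> B" "u v \<noteq> 0" and s: "(\<Sum>w\<in>B. u w *\<^sub>R w) = 0"
    using real_vector.dependent_finite by metis
  have "u v = m (\<Sum>w\<in>B. u w *\<^sub>R w) (d v)" using coef[OF fr v(1)] by simp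
  also have "\<dots> = 0" using s by simp
  finally show False using v by simp
qed

lemma frame_span:
  assumes "subspace V" "frame m V B d" shows "span B = V"
  using assms by (intro real_vector.span_subspace) (auto simp: frame_def)

lemma frame_exp:
  assumes fr: "frame m V B d" and v: "v \<in> V"
  shows "(\<Sum>b\<in>B. m v (d b) *\<^sub>R b) = v"
proof -
  have fin: "finite B" and "v \<in> span B" using fr v by (auto simp: frame_def)
  then obtain u where u: "v = (\<Sum>b\<in>B. u b *\<^sub>R b)" using span_finite[OF fin] by auto
  have "m v (d b) = u b" if "b \<in> B" for b using coef[OF fr that] u by simp
  then have "(\<Sum>b\<in>B. m v (d b) *\<^sub>R b) = (\<Sum>b\<in>B. u b *\<^sub>R b)" by simp
  then show ?thesis using u by simp
qed

lemma frame_trace: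
  assumes V: "subspace V" and fr: "frame m V B d" and lf: "linear f" and fV: "\<And>v. v \<in> V \<Longrightarrow> f v \<in> V"
  shows "trace_on V f = (\<Sum>b\<in>B. m (f b) (d b))"
proof -
  have iB: "independent B" by (rule frame_indep[OF fr])
  have sB: "span B = V" by (rule frame_span[OF V fr])
  have fin: "finite B" and BV: "B \<subseteq> V" using fr by (auto simp: frame_def)
  have "trace_on V f = rtr B f" by (rule trace_on_rtr[OF V iB sB lf fV])
  also have "\<dots> = (\<Sum>b\<in>B. m (f b) (d b))"
    unfolding rtr_def
  proof (rule sum.cong[OF refl])
    fix b assume b: "b \<in> B"
    have fb: "f b \<in> V" using b BV fV by auto
    have "representation B (f b) b = representation B (\<Sum>c\<in>B. m (f b) (d c) *\<^sub>R c) b"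
      using frame_exp[OF fr fb] by simp
    also have "\<dots> = (\<Sum>c\<in>B. m (f b) (d c) * representation B c b)"
      by (rule rep_lin[OF iB fin]) (simp add: span_base)
    also have "\<dots> = (\<Sum>c\<in>B. if c = b then m (f b) (d c) else 0)"
      by (intro sum.cong refl) (simp add: real_vector.representation_basis[OF iB])
    also have "\<dots> = m (f b) (d b)" using b fin by simp
    finally show "representation B (f b) b = m (f b) (d b)" .
  qed
  finally show ?thesis .
qed

lemma frame_parseval:
  assumes fr: "frame m V B d" and y: "y \<in> V"
  shows "(\<Sum>b\<in>B. m x b * m (d b) y) = m x y"
proof -
  have "m x y = m x (\<Sum>b\<in>B. m y (d b) *\<^sub>R b)" using frame_exp[OF fr y] by simp
  also have "\<dots> = (\<Sum>b\<in>B. m x b * m (d b) y)" by (simp add: m_sum_r sm[of y] mult.commute)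
  finally show ?thesis by simp
qed

lemma frame_exp_t:
  assumes nd: "ndeg m V" and V: "subspace V" and fr: "frame m V B d" and v: "v \<in> V"
  shows "(\<Sum>b\<in>B. m v b *\<^sub>R d b) = v"
proof -
  let ?w = "(\<Sum>b\<in>B. m v b *\<^sub>R d b) - v"
  have dV: "d b \<in> V" if "b \<in> B" for b using fr that by (simp add: frame_def)
  have wV: "?w \<in> V"
    using V v dV by (intro subspace_diff subspace_sum subspace_scale) auto
  have "m ?w y = 0" if y: "y \<in> V" for y
  proof -
    have "m (\<Sum>b\<in>B. m v b *\<^sub>R d b) y = (\<Sum>b\<in>B. m v b * m (d b) y)" by (simp add: m_sum_l)
    also have "\<dots> = m v y" by (rule frame_parseval[OF fr y])
    finally show ?thesis by simp
  qed
  then have "?w = 0" using nd wV unfolding ndeg_def by blast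
  then show ?thesis by simp
qed

lemma frame_contract_sym:
  fixes \<beta> :: "'a \<Rightarrow> 'a \<Rightarrow> 'b::real_vector"
  assumes fr: "frame m V B d" and b: "bilinear \<beta>"
  shows "(\<Sum>e\<in>B. \<beta> e (d e)) = (\<Sum>e\<in>B. \<beta> (d e) e)"
proof -
  have l1: "linear (\<lambda>x. \<beta> x y)" and l2: "linear (\<beta> x)" for x y using b by (auto simp: bilinear_def)
  have dV: "d e \<in> V" if "e \<in> B" for e using fr that by (simp add: frame_def)
  have ex: "d e = (\<Sum>c\<in>B. m (d e) (d c) *\<^sub>R c)" if "e \<in> B" for e
    using frame_exp[OF fr dV[OF that]] by simp
  have "(\<Sum>e\<in>B. \<beta> e (d e)) = (\<Sum>e\<in>B. \<Sum>c\<in>B. m (d e) (d c) *\<^sub>R \<beta> e c)"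
  proof (rule sum.cong[OF refl])
    fix e assume e: "e \<in> B"
    have "\<beta> e (d e) = \<beta> e (\<Sum>c\<in>B. m (d e) (d c) *\<^sub>R c)" using ex[OF e] by simp
    also have "\<dots> = (\<Sum>c\<in>B. m (d e) (d c) *\<^sub>R \<beta> e c)"
      by (simp add: linear_sum[OF l2] linear_scale[OF l2])
    finally show "\<beta> e (d e) = (\<Sum>c\<in>B. m (d e) (d c) *\<^sub>R \<beta> e c)" .
  qed
  also have "\<dots> = (\<Sum>c\<in>B. \<Sum>e\<in>B. m (d c) (d e) *\<^sub>R \<beta> e c)"
    by (subst sum.swap) (simp add: sm)
  also have "\<dots> = (\<Sum>c\<in>B. \<beta> (d c) c)"
  proof (rule sum.cong[OF refl])
    fix c assume c: "c \<in> B"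
    have "\<beta> (d c) c = \<beta> (\<Sum>e\<in>B. m (d c) (d e) *\<^sub>R e) c" using ex[OF c] by simp
    also have "\<dots> = (\<Sum>e\<in>B. m (d c) (d e) *\<^sub>R \<beta> e c)"
      by (simp add: linear_sum[OF l1] linear_scale[OF l1])
    finally show "(\<Sum>e\<in>B. m (d c) (d e) *\<^sub>R \<beta> e c) = \<beta> (d c) c" by simp
  qed
  finally show ?thesis .
qed

lemma exp_apply:
  assumes fr: "frame m V B d" and lA: "linear A" and v: "v \<in> V"
  shows "m (A v) y = (\<Sum>c\<in>B. m v (d c) * m (A c) y)"
proof -
  have "A v = A (\<Sum>c\<in>B. m v (d c) *\<^sub>R c)" using frame_exp[OF fr v] by simp
  also have "\<dots> = (\<Sum>c\<in>B. m v (d c) *\<^sub>R A c)" by (simp add: linear_sum[OF lA] linear_scale[OF lA])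
  finally show ?thesis by (simp add: m_sum_l)
qed

lemma frame_cyclic:
  assumes fr: "frame m V B d" and lA: "linear A" and lC: "linear C"
    and AV: "\<And>v. v \<in> V \<Longrightarrow> A v \<in> V" and CV: "\<And>v. v \<in> V \<Longrightarrow> C v \<in> V"
  shows "(\<Sum>e\<in>B. m (A (C e)) (d e)) = (\<Sum>e\<in>B. m (C (A e)) (d e))"
proof -
  have BV: "e \<in> B \<Longrightarrow> e \<in> V" for e using fr by (auto simp: frame_def)
  have "(\<Sum>e\<in>B. m (A (C e)) (d e)) = (\<Sum>e\<in>B. \<Sum>c\<in>B. m (C e) (d c) * m (A c) (d e))"
    by (intro sum.cong refl exp_apply[OF fr lA] CV BV)
  also have "\<dots> = (\<Sum>c\<in>B. \<Sum>e\<in>B. m (A c) (d e) * m (C e) (d c))"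
    by (subst sum.swap) (intro sum.cong refl mult.commute)
  also have "\<dots> = (\<Sum>c\<in>B. m (C (A c)) (d c))"
    by (intro sum.cong refl exp_apply[OF fr lC, symmetric] AV BV)
  finally show ?thesis .
qed

lemma frame_selfadj_move:
  fixes \<beta> :: "'a \<Rightarrow> 'a \<Rightarrow> 'b::real_vector"
  assumes nd: "ndeg m V" and V: "subspace V" and fr: "frame m V B d" and b: "bilinear \<beta>"
    and lS: "linear S" and SV: "\<And>v. v \<in> V \<Longrightarrow> S v \<in> V"
    and sa: "\<And>x y. x \<in> V \<Longrightarrow> y \<in> V \<Longrightarrow> m (S x) y = m x (S y)"
  shows "(\<Sum>e\<in>B. \<beta> (S e) (d e)) = (\<Sum>e\<in>B. \<beta> e (S (d e)))"
proof -
  have l1: "linear (\<lambda>x. \<beta> x y)" and l2: "linear (\<beta> x)" for x y using b by (auto simp: bilinear_def)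
  have BV: "e \<in> B \<Longrightarrow> e \<in> V" for e using fr by (auto simp: frame_def)
  have dV: "d e \<in> V" if "e \<in> B" for e using fr that by (simp add: frame_def)
  have "(\<Sum>e\<in>B. \<beta> (S e) (d e)) = (\<Sum>e\<in>B. \<Sum>c\<in>B. m (S e) (d c) *\<^sub>R \<beta> c (d e))"
  proof (rule sum.cong[OF refl])
    fix e assume e: "e \<in> B"
    have "\<beta> (S e) (d e) = \<beta> (\<Sum>c\<in>B. m (S e) (d c) *\<^sub>R c) (d e)"
      using frame_exp[OF fr SV[OF BV[OF e]]] by simp
    also have "\<dots> = (\<Sum>c\<in>B. m (S e) (d c) *\<^sub>R \<beta> c (d e))"
      by (simp add: linear_sum[OF l1] linear_scale[OF l1])
    finally show "\<beta> (S e) (d e) = (\<Sum>c\<in>B. m (S e) (d c) *\<^sub>R \<beta> c (d e))" .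
  qed
  also have "\<dots> = (\<Sum>c\<in>B. \<Sum>e\<in>B. m (S e) (d c) *\<^sub>R \<beta> c (d e))"
    by (rule sum.swap)
  also have "\<dots> = (\<Sum>c\<in>B. \<beta> c (S (d c)))"
  proof (rule sum.cong[OF refl])
    fix c assume c: "c \<in> B"
    have "(\<Sum>e\<in>B. m (S e) (d c) *\<^sub>R \<beta> c (d e)) = \<beta> c (\<Sum>e\<in>B. m (S e) (d c) *\<^sub>R d e)"
      by (simp add: linear_sum[OF l2] linear_scale[OF l2])
    also have "(\<Sum>e\<in>B. m (S e) (d c) *\<^sub>R d e) = (\<Sum>e\<in>B. m (S (d c)) e *\<^sub>R d e)"
      by (intro sum.cong refl) (simp add: sa BV dV c sm[of e "S (d c)" for e])
    also have "\<dots> = S (d c)" by (rule frame_exp_t[OF nd V fr SV[OF dV[OF c]]])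
    finally show "(\<Sum>e\<in>B. m (S e) (d c) *\<^sub>R \<beta> c (d e)) = \<beta> c (S (d c))" .
  qed
  finally show ?thesis .
qed

lemma coef_unique:
  assumes "finite B" "independent B" "(\<Sum>b\<in>B. u b *\<^sub>R b) = (\<Sum>b\<in>B. v b *\<^sub>R b)" "c \<in> B"
  shows "u c = v c"
proof (rule ccontr)
  assume ne: "u c \<noteq> v c"
  have "(\<Sum>b\<in>B. (u b - v b) *\<^sub>R b) = 0"
    using assms(3) by (simp add: scaleR_diff_left sum_subtractf)
  then have "dependent B" using real_vector.dependent_finite[OF assms(1)] ne assms(4)
    by (metis eq_iff_diff_eq_0)
  then show False using assms(2) by simp
qed

lemma frame_exists:
  assumes nd: "ndeg m V" and V: "subspace V"
  shows "\<exists>B d. frame m V B d"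
proof -
  obtain B where b1: "B \<subseteq> V" and b2: "independent B" and b3: "V \<subseteq> span B"
    using real_vector.basis_exists[of V] by metis
  have fin: "finite B" using b2 by (rule finiteI_independent)
  have sB: "span B = V" by (rule real_vector.span_subspace) fact+
  define T where "T z = (\<Sum>b\<in>B. m z b *\<^sub>R b)" for z
  have lT: "linear T"
    by (rule linearI) (simp_all add: T_def scaleR_add_left sum.distrib scaleR_sum_right)
  have TV: "T z \<in> V" for z
  proof -
    have "T z \<in> span B" unfolding T_def by (intro span_sum span_scale span_base)
    then show ?thesis using sB by simp
  qed
  have inj: "inj_on T V"
  proof (rule inj_onI)
    fix x y assume x: "x \<in> V" and y: "y \<in> V" and e: "T x = T y"
    have c: "m x b = m y b" if "b \<in> B" for b
      using coef_unique[OF fin b2 _ that, of "\<lambda>b. m x b" "\<lambda>b. m y b"] e by (simp add: T_def)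
    have "m (x - y) w = 0" if w: "w \<in> V" for w
    proof -
      have "w \<in> span B" using w sB by simp
      then obtain u where u: "w = (\<Sum>b\<in>B. u b *\<^sub>R b)" using span_finite[OF fin] by auto
      show ?thesis unfolding u by (simp add: m_sum_r c)
    qed
    moreover have "x - y \<in> V" using x y V by (rule_tac subspace_diff) auto
    ultimately have "x - y = 0" using nd unfolding ndeg_def by blast
    then show "x = y" by simp
  qed
  have sV: "span V = V" using V by (simp only: span_eq_iff)
  have "dim (T ` V) = dim V" using dim_image_eq[OF lT, of V] inj unfolding sV by blast
  moreover have TVV: "T ` V \<subseteq> V" using TV by auto
  ultimately have "span (T ` V) = span V" using dim_eq_span[of "T ` V" V] by simp
  moreover have "span (T ` V) = T ` V" using linear_subspace_image[OF lT V] by (simp only: span_eq_iff)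
  ultimately have surj: "T ` V = V" using sV by simp
  define d where "d c = (SOME z. z \<in> V \<and> T z = c)" for c
  have d: "d c \<in> V \<and> T (d c) = c" if "c \<in> B" for c
  proof -
    have "c \<in> T ` V" using that b1 surj by auto
    then have "\<exists>z. z \<in> V \<and> T z = c" by auto
    then show ?thesis unfolding d_def by (rule someI_ex)
  qed
  have delta: "m b (d c) = (if b = c then 1 else 0)" if b: "b \<in> B" and c: "c \<in> B" for b c
  proof -
    have "(\<Sum>x\<in>B. (if x = c then 1 else 0) *\<^sub>R x) = (\<Sum>x\<in>B. if x = c then x else 0)"
      by (intro sum.cong refl) simp
    also have "\<dots> = c" using c fin by simp
    also have "c = (\<Sum>x\<in>B. m (d c) x *\<^sub>R x)" using d[OF c] by (simp add: T_def)
    finally have "(\<Sum>x\<in>B. m (d c) x *\<^sub>R x) = (\<Sum>x\<in>B. (if x = c then 1 else 0) *\<^sub>R x)" by simp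
    from coef_unique[OF fin b2 this b] show ?thesis by (simp add: sm)
  qed
  have "frame m V B d" unfolding frame_def using fin b1 b3 d delta by auto
  then show ?thesis by blast
qed

lemma representer:
  assumes V: "subspace V" and fr: "frame m V B d" and lp: "linear \<phi>"
  shows "(\<Sum>b\<in>B. \<phi> b *\<^sub>R d b) \<in> V" (is ?A)
    and "\<And>w. w \<in> V \<Longrightarrow> m (\<Sum>b\<in>B. \<phi> b *\<^sub>R d b) w = \<phi> w"
proof -
  have dV: "d e \<in> V" if "e \<in> B" for e using fr that by (simp add: frame_def)
  show ?A using dV V by (intro subspace_sum subspace_scale) auto
  fix w assume w: "w \<in> V"
  have "\<phi> w = \<phi> (\<Sum>b\<in>B. m w (d b) *\<^sub>R b)" using frame_exp[OF fr w] by simp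
  also have "\<dots> = (\<Sum>b\<in>B. m w (d b) * \<phi> b)" by (simp add: linear_sum[OF lp] linear_scale[OF lp])
  finally show "m (\<Sum>b\<in>B. \<phi> b *\<^sub>R d b) w = \<phi> w" by (simp add: m_sum_l sm[of "d _" w] mult.commute)
qed

end

section \<open>Lie algebra with metric\<close>

locale LA = bil m for m :: "'a::euclidean_space \<Rightarrow> 'a \<Rightarrow> real" +
  fixes br :: "'a \<Rightarrow> 'a \<Rightarrow> 'a"
  assumes bbr: "bilinear br" and anti: "\<And>x y. br x y = - br y x"
    and jac: "\<And>x y z. br x (br y z) + br y (br z x) + br z (br x y) = 0"
begin

lemma br_lin_l: "linear (\<lambda>x. br x y)" using bbr by (simp add: bilinear_def)
lemma br_lin_r: "linear (br x)" using bbr by (simp add: bilinear_def)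

lemma br_add_l[simp]: "br (x + y) z = br x z + br y z" using linear_add[OF br_lin_l] by simp
lemma br_add_r[simp]: "br z (x + y) = br z x + br z y" using linear_add[OF br_lin_r] by simp
lemma br_diff_l[simp]: "br (x - y) z = br x z - br y z" using linear_diff[OF br_lin_l] by simp
lemma br_diff_r[simp]: "br z (x - y) = br z x - br z y" using linear_diff[OF br_lin_r] by simp
lemma br_scale_l[simp]: "br (c *\<^sub>R x) z = c *\<^sub>R br x z" using linear_scale[OF br_lin_l] by simp
lemma br_scale_r[simp]: "br z (c *\<^sub>R x) = c *\<^sub>R br z x" using linear_scale[OF br_lin_r] by simp
lemma br_neg_l[simp]: "br (- x) z = - br x z" using linear_neg[OF br_lin_l] by simp
lemma br_neg_r[simp]: "br z (- x) = - br z x" using linear_neg[OF br_lin_r] by simp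
lemma br_zero_l[simp]: "br 0 z = 0" using linear_0[OF br_lin_l] by simp
lemma br_zero_r[simp]: "br z 0 = 0" using linear_0[OF br_lin_r] by simp

lemma lc_unique:
  assumes V: "subspace V" and nd: "ndeg m V" and z: "z \<in> V"
    and K: "\<And>w. w \<in> V \<Longrightarrow> 2 * m z w = m (br x y) w - m (br y w) x + m (br w x) y"
  shows "lc_conn V br m x y = z"
  unfolding lc_conn_def
proof (rule the_equality)
  show "z \<in> V \<and> (\<forall>w\<in>V. 2 * m z w = m (br x y) w - m (br y w) x + m (br w x) y)" using z K by blast
  fix z' assume z': "z' \<in> V \<and> (\<forall>w\<in>V. 2 * m z' w = m (br x y) w - m (br y w) x + m (br w x) y)"
  have "z' - z \<in> V" using z z' V by (rule_tac subspace_diff) auto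
  moreover have "\<forall>w\<in>V. m (z' - z) w = 0"
  proof
    fix w assume w: "w \<in> V"
    have "2 * m z' w = m (br x y) w - m (br y w) x + m (br w x) y" using z' w by blast
    moreover have "2 * m z w = m (br x y) w - m (br y w) x + m (br w x) y" using K[OF w] .
    ultimately show "m (z' - z) w = 0" by simp
  qed
  ultimately have "z' - z = 0" using nd unfolding ndeg_def by blast
  then show "z' = z" by simp
qed

lemma lc_spec:
  assumes V: "subspace V" and nd: "ndeg m V"
  shows "lc_conn V br m x y \<in> V"
    and "\<And>w. w \<in> V \<Longrightarrow> 2 * m (lc_conn V br m x y) w = m (br x y) w - m (br y w) x + m (br w x) y"
proof -
  obtain B d where fr: "frame m V B d" using frame_exists[OF nd V] by blast
  define \<phi> where "\<phi> w = (m (br x y) w - m (br y w) x + m (br w x) y) / 2" for w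
  have lp: "linear \<phi>" by (rule linearI) (simp_all add: \<phi>_def field_simps)
  define z where "z = (\<Sum>b\<in>B. \<phi> b *\<^sub>R d b)"
  have zV: "z \<in> V" unfolding z_def by (rule representer(1)[OF V fr lp])
  have zK: "2 * m z w = m (br x y) w - m (br y w) x + m (br w x) y" if "w \<in> V" for w
    using representer(2)[OF V fr lp that, folded z_def] unfolding \<phi>_def by simp
  have "lc_conn V br m x y = z" by (rule lc_unique[OF V nd zV zK])
  then show "lc_conn V br m x y \<in> V"
    and "\<And>w. w \<in> V \<Longrightarrow> 2 * m (lc_conn V br m x y) w = m (br x y) w - m (br y w) x + m (br w x) y"
    using zV zK by auto
qed

lemma lc_lin1:
  assumes V: "subspace V" and nd: "ndeg m V"
  shows "linear (\<lambda>x. lc_conn V br m x y)"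
proof (rule linearI)
  note s = lc_spec[OF V nd]
  show "lc_conn V br m (b1 + b2) y = lc_conn V br m b1 y + lc_conn V br m b2 y" for b1 b2
  proof (rule lc_unique[OF V nd])
    show "lc_conn V br m b1 y + lc_conn V br m b2 y \<in> V" using s V by (auto intro: subspace_add)
    fix w assume w: "w \<in> V"
    note e1 = s(2)[OF w, of b1 y] and e2 = s(2)[OF w, of b2 y]
    have "2 * m (lc_conn V br m b1 y + lc_conn V br m b2 y) w = 2 * m (lc_conn V br m b1 y) w + 2 * m (lc_conn V br m b2 y) w" by simp
    moreover have "m (br (b1 + b2) y) w - m (br y w) (b1 + b2) + m (br w (b1 + b2)) y =
      (m (br b1 y) w - m (br y w) b1 + m (br w b1) y) + (m (br b2 y) w - m (br y w) b2 + m (br w b2) y)" by simp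
    ultimately show "2 * m (lc_conn V br m b1 y + lc_conn V br m b2 y) w = m (br (b1 + b2) y) w - m (br y w) (b1 + b2) + m (br w (b1 + b2)) y"
      using e1 e2 by linarith
  qed
  show "lc_conn V br m (r *\<^sub>R b) y = r *\<^sub>R lc_conn V br m b y" for r b
  proof (rule lc_unique[OF V nd])
    show "r *\<^sub>R lc_conn V br m b y \<in> V" using s V by (auto intro: subspace_scale)
    fix w assume w: "w \<in> V"
    have "2 * m (r *\<^sub>R lc_conn V br m b y) w = r * (2 * m (lc_conn V br m b y) w)" by simp
    also have "\<dots> = r * (m (br b y) w - m (br y w) b + m (br w b) y)" using s(2)[OF w] by simp
    finally show "2 * m (r *\<^sub>R lc_conn V br m b y) w = m (br (r *\<^sub>R b) y) w - m (br y w) (r *\<^sub>R b) + m (br w (r *\<^sub>R b)) y"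
      by (simp add: algebra_simps)
  qed
qed

lemma lc_lin2:
  assumes V: "subspace V" and nd: "ndeg m V"
  shows "linear (lc_conn V br m x)"
proof (rule linearI)
  note s = lc_spec[OF V nd]
  show "lc_conn V br m x (b1 + b2) = lc_conn V br m x b1 + lc_conn V br m x b2" for b1 b2
  proof (rule lc_unique[OF V nd])
    show "lc_conn V br m x b1 + lc_conn V br m x b2 \<in> V" using s V by (auto intro: subspace_add)
    fix w assume w: "w \<in> V"
    note e1 = s(2)[OF w, of x b1] and e2 = s(2)[OF w, of x b2]
    have "2 * m (lc_conn V br m x b1 + lc_conn V br m x b2) w = 2 * m (lc_conn V br m x b1) w + 2 * m (lc_conn V br m x b2) w" by simp
    moreover have "m (br x (b1 + b2)) w - m (br (b1 + b2) w) x + m (br w x) (b1 + b2) =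
      (m (br x b1) w - m (br b1 w) x + m (br w x) b1) + (m (br x b2) w - m (br b2 w) x + m (br w x) b2)" by simp
    ultimately show "2 * m (lc_conn V br m x b1 + lc_conn V br m x b2) w = m (br x (b1 + b2)) w - m (br (b1 + b2) w) x + m (br w x) (b1 + b2)"
      using e1 e2 by linarith
  qed
  show "lc_conn V br m x (r *\<^sub>R b) = r *\<^sub>R lc_conn V br m x b" for r b
  proof (rule lc_unique[OF V nd])
    show "r *\<^sub>R lc_conn V br m x b \<in> V" using s V by (auto intro: subspace_scale)
    fix w assume w: "w \<in> V"
    have "2 * m (r *\<^sub>R lc_conn V br m x b) w = r * (2 * m (lc_conn V br m x b) w)" by simp
    also have "\<dots> = r * (m (br x b) w - m (br b w) x + m (br w x) b)" using s(2)[OF w] by simp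
    finally show "2 * m (r *\<^sub>R lc_conn V br m x b) w = m (br x (r *\<^sub>R b)) w - m (br (r *\<^sub>R b) w) x + m (br w x) (r *\<^sub>R b)"
      by (simp add: algebra_simps)
  qed
qed

lemma curv_lin1:
  assumes V: "subspace V" and nd: "ndeg m V"
  shows "linear (\<lambda>z. curv V br m z x y)"
proof -
  note l1 = lc_lin1[OF V nd] and l2 = lc_lin2[OF V nd]
  have a: "linear (\<lambda>z. lc_conn V br m z (lc_conn V br m x y))" by (rule l1)
  have b: "linear (\<lambda>z. lc_conn V br m x (lc_conn V br m z y))"
    using linear_compose[OF l1 l2] by (simp add: o_def)
  have c: "linear (\<lambda>z. lc_conn V br m (br z x) y)"
    using linear_compose[OF br_lin_l l1] by (simp add: o_def)
  show ?thesis unfolding curv_def by (intro linear_compose_sub a b c)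
qed

lemma curv_lin2:
  assumes V: "subspace V" and nd: "ndeg m V"
  shows "linear (\<lambda>x. curv V br m z x y)"
proof -
  note l1 = lc_lin1[OF V nd] and l2 = lc_lin2[OF V nd]
  have a: "linear (\<lambda>x. lc_conn V br m z (lc_conn V br m x y))"
    using linear_compose[OF l1 l2] by (simp add: o_def)
  have b: "linear (\<lambda>x. lc_conn V br m x (lc_conn V br m z y))" by (rule l1)
  have c: "linear (\<lambda>x. lc_conn V br m (br z x) y)"
    using linear_compose[OF br_lin_r l1] by (simp add: o_def)
  show ?thesis unfolding curv_def by (intro linear_compose_sub a b c)
qed

lemma curv_lin3:
  assumes V: "subspace V" and nd: "ndeg m V"
  shows "linear (\<lambda>y. curv V br m z x y)"
proof -
  note l1 = lc_lin1[OF V nd] and l2 = lc_lin2[OF V nd]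
  have a: "linear (\<lambda>y. lc_conn V br m z (lc_conn V br m x y))"
    using linear_compose[OF l2 l2] by (simp add: o_def)
  have b: "linear (\<lambda>y. lc_conn V br m x (lc_conn V br m z y))"
    using linear_compose[OF l2 l2] by (simp add: o_def)
  have c: "linear (\<lambda>y. lc_conn V br m (br z x) y)" by (rule l2)
  show ?thesis unfolding curv_def by (intro linear_compose_sub a b c)
qed

lemma curv_in:
  assumes V: "subspace V" and nd: "ndeg m V"
  shows "curv V br m z x y \<in> V"
  unfolding curv_def using lc_spec(1)[OF V nd] V by (intro subspace_diff) auto

lemma ricci_frame:
  assumes V: "subspace V" and nd: "ndeg m V" and fr: "frame m V B d"
  shows "ricci_tensor V br m x y = (\<Sum>b\<in>B. m (curv V br m b x y) (d b))"
  unfolding ricci_tensor_def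
  by (rule frame_trace[OF V fr curv_lin1[OF V nd]]) (rule curv_in[OF V nd])

lemma ricci_lin2:
  assumes V: "subspace V" and nd: "ndeg m V"
  shows "linear (\<lambda>y. ricci_tensor V br m x y)"
proof -
  obtain B d where fr: "frame m V B d" using frame_exists[OF nd V] by blast
  have "linear (\<lambda>y. (\<Sum>b\<in>B. m (curv V br m b x y) (d b)))"
    by (rule linear_compose_sum) (use linear_compose[OF curv_lin3[OF V nd] m_lin_l] in \<open>simp add: o_def\<close>)
  then show ?thesis unfolding ricci_frame[OF V nd fr] .
qed

lemma ricci_lin1:
  assumes V: "subspace V" and nd: "ndeg m V"
  shows "linear (\<lambda>x. ricci_tensor V br m x y)"
proof -
  obtain B d where fr: "frame m V B d" using frame_exists[OF nd V] by blast
  have "linear (\<lambda>x. (\<Sum>b\<in>B. m (curv V br m b x y) (d b)))"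
    by (rule linear_compose_sum) (use linear_compose[OF curv_lin2[OF V nd] m_lin_l] in \<open>simp add: o_def\<close>)
  then show ?thesis unfolding ricci_frame[OF V nd fr] .
qed

lemma ricci_op_iff:
  assumes V: "subspace V" and nd: "ndeg m V" and r: "r \<in> V"
  shows "ricci_op V br m x = r \<longleftrightarrow> (\<forall>y\<in>V. m r y = ricci_tensor V br m x y)"
proof -
  have uniq: "r1 = r2" if "r1 \<in> V" "r2 \<in> V" "\<forall>y\<in>V. m r1 y = ricci_tensor V br m x y"
    "\<forall>y\<in>V. m r2 y = ricci_tensor V br m x y" for r1 r2
  proof -
    have "r1 - r2 \<in> V" using that V by (rule_tac subspace_diff) auto
    moreover have "\<forall>y\<in>V. m (r1 - r2) y = 0" using that by auto
    ultimately have "r1 - r2 = 0" using nd unfolding ndeg_def by blast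
    then show ?thesis by simp
  qed
  obtain B d where fr: "frame m V B d" using frame_exists[OF nd V] by blast
  define r0 where "r0 = (\<Sum>b\<in>B. ricci_tensor V br m x b *\<^sub>R d b)"
  have r0: "r0 \<in> V" "\<forall>y\<in>V. m r0 y = ricci_tensor V br m x y"
    using representer(1)[OF V fr ricci_lin2[OF V nd], of x, folded r0_def]
      representer(2)[OF V fr ricci_lin2[OF V nd], of _ x, folded r0_def] by auto
  have "ricci_op V br m x = r0" unfolding ricci_op_def
    by (rule the_equality) (use r0 uniq in auto)
  then show ?thesis using uniq[OF r r0(1)] r0 by auto
qed

end

section \<open>Pseudo-Iwasawa setting\<close>

locale PI = LA m br for m :: "'a::euclidean_space \<Rightarrow> 'a \<Rightarrow> real" and br +
  fixes g a :: "'a set"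
  assumes sg: "subspace g" and sa: "subspace a"
    and ideal: "\<And>x y. y \<in> g \<Longrightarrow> br x y \<in> g"
    and ab: "\<And>X Y. X \<in> a \<Longrightarrow> Y \<in> a \<Longrightarrow> br X Y = 0"
    and cap: "g \<inter> a = {0}"
    and dec: "\<And>v. \<exists>x\<in>g. \<exists>y\<in>a. v = x + y"
    and orth: "\<And>x y. x \<in> g \<Longrightarrow> y \<in> a \<Longrightarrow> m x y = 0"
    and sadj: "\<And>X u v. X \<in> a \<Longrightarrow> m (br X u) v = m u (br X v)"
    and nil: "nilpotent_on g br"
    and ndU: "\<And>x. (\<forall>y. m x y = 0) \<Longrightarrow> x = 0"
begin

lemma orth': "x \<in> a \<Longrightarrow> y \<in> g \<Longrightarrow> m x y = 0" using orth sm by metis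

lemma nd_g: "ndeg m g"
  unfolding ndeg_def
proof (intro ballI impI)
  fix x assume x: "x \<in> g" and h: "\<forall>y\<in>g. m x y = 0"
  have "m x v = 0" for v
  proof -
    obtain y Y where "y \<in> g" "Y \<in> a" "v = y + Y" using dec by blast
    then show ?thesis using h orth[OF x] by simp
  qed
  then show "x = 0" using ndU by blast
qed

lemma nd_a: "ndeg m a"
  unfolding ndeg_def
proof (intro ballI impI)
  fix x assume x: "x \<in> a" and h: "\<forall>y\<in>a. m x y = 0"
  have "m x v = 0" for v
  proof -
    obtain y Y where "y \<in> g" "Y \<in> a" "v = y + Y" using dec by blast
    then show ?thesis using h orth'[OF x] by simp
  qed
  then show "x = 0" using ndU by blast
qed

lemma nd_U: "ndeg m UNIV" unfolding ndeg_def using ndU by blast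

lemma brg: "br x y \<in> g"
proof -
  obtain x1 X1 where x: "x1 \<in> g" "X1 \<in> a" "x = x1 + X1" using dec by blast
  obtain y1 Y1 where y: "y1 \<in> g" "Y1 \<in> a" "y = y1 + Y1" using dec by blast
  have "br x y = br x y1 + br x Y1" using y(3) by simp
  also have "br x Y1 = br x1 Y1 + br X1 Y1" using x(3) by simp
  also have "br X1 Y1 = 0" using ab x y by simp
  also have "br x1 Y1 = - br Y1 x1" by (rule anti)
  finally have "br x y = br x y1 + (- br Y1 x1 + 0)" .
  moreover have "br x y1 \<in> g" "br Y1 x1 \<in> g" using ideal[OF y(1)] ideal[OF x(1)] by blast+
  ultimately show ?thesis using sg by (simp add: subspace_diff)
qed

lemma perp_a:
  assumes "\<And>w. w \<in> g \<Longrightarrow> m x w = 0" shows "x \<in> a"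
proof -
  obtain u X where u: "u \<in> g" "X \<in> a" "x = u + X" using dec by blast
  have "\<forall>w\<in>g. m u w = 0" using assms u orth' by auto
  then have "u = 0" using nd_g u unfolding ndeg_def by blast
  then show ?thesis using u by simp
qed

lemma L_sub: "lower_central g br i \<subseteq> g \<and> subspace (lower_central g br i)"
proof (induction i)
  case 0 show ?case using sg by simp
next
  case (Suc i)
  have "{br x y |x y. x \<in> g \<and> y \<in> lower_central g br i} \<subseteq> g" using ideal Suc by auto
  then have "span {br x y |x y. x \<in> g \<and> y \<in> lower_central g br i} \<subseteq> g" using sg by (rule span_minimal)
  then show ?case by simp
qed

lemma L_shift: "w \<in> g \<Longrightarrow> y \<in> lower_central g br i \<Longrightarrow> br w y \<in> lower_central g br (Suc i)"
  by (auto intro: span_base)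

lemma L_pres: "y \<in> lower_central g br i \<Longrightarrow> br x y \<in> lower_central g br i"
proof (induction i arbitrary: y)
  case 0 then show ?case using ideal by simp
next
  case (Suc i)
  let ?S = "{br u v |u v. u \<in> g \<and> v \<in> lower_central g br i}"
  have y: "y \<in> span ?S" using Suc.prems by simp
  have "br x y \<in> span ?S"
  proof (rule span_induct[OF y, where P = "\<lambda>y. br x y \<in> span ?S"])
    show "subspace {y. br x y \<in> span ?S}"
      unfolding subspace_def by (auto intro: span_add span_scale span_zero)
    fix z assume "z \<in> ?S"
    then obtain u v where uv: "u \<in> g" "v \<in> lower_central g br i" "z = br u v" by blast
    have j: "br x (br u v) = br (br x u) v + br u (br x v)"
      using jac[of x u v] anti[of v x] anti[of "br x u" v] anti[of u "br v x"]
      by (simp add: algebra_simps)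
    have "br (br x u) v \<in> ?S" using brg uv by blast
    moreover have "br u (br x v) \<in> ?S" using Suc.IH uv by blast
    ultimately show "br x z \<in> span ?S" using j uv by (auto intro: span_add span_base)
  qed
  then show ?case by simp
qed

lemma trace_g0:
  assumes lf: "linear f" and sh: "\<And>i y. y \<in> lower_central g br i \<Longrightarrow> f y \<in> lower_central g br (Suc i)"
  shows "trace_on g f = 0"
proof -
  obtain k where k: "lower_central g br k = {0}" using nil unfolding nilpotent_on_def by blast
  have pw: "(f ^^ j) y \<in> lower_central g br j" if "y \<in> g" for j y
    by (induction j) (use that sh in auto)
  have fg: "f v \<in> g" if "v \<in> g" for v
    using sh[of v 0] that L_sub[of 1] by auto
  show ?thesis
  proof (rule trace_nilpotent[OF sg lf fg, of k])
    fix v assume "v \<in> g"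
    then have "(f ^^ k) v \<in> lower_central g br k" by (rule pw)
    then show "(f ^^ k) v = 0" using k by simp
  qed
qed

end

locale PIF = PI m br g a for m :: "'a::euclidean_space \<Rightarrow> 'a \<Rightarrow> real" and br g a +
  fixes E F :: "'a set" and de df :: "'a \<Rightarrow> 'a"
  assumes frE: "frame m g E de" and frF: "frame m a F df"
begin

definition dU :: "'a \<Rightarrow> 'a" where "dU x = (if x \<in> E then de x else df x)"

lemma finE: "finite E" and finF: "finite F" and Eg: "e \<in> E \<Longrightarrow> e \<in> g" and Fa: "f \<in> F \<Longrightarrow> f \<in> a"
  and deg: "e \<in> E \<Longrightarrow> de e \<in> g" and dfa: "f \<in> F \<Longrightarrow> df f \<in> a"
  using frE frF unfolding frame_def by auto

lemma EF_disj: "E \<inter> F = {}"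
proof (rule ccontr)
  assume "E \<inter> F \<noteq> {}"
  then obtain x where x: "x \<in> E" "x \<in> F" by blast
  then have "x = 0" using Eg Fa cap by blast
  moreover have "m x (de x) = 1" using frE x unfolding frame_def by auto
  ultimately show False by simp
qed

lemma frU: "frame m UNIV (E \<union> F) dU"
  unfolding frame_def
proof (intro conjI ballI)
  show "finite (E \<union> F)" using finE finF by simp
  show "E \<union> F \<subseteq> UNIV" by simp
  show "dU b \<in> UNIV" for b by simp
  fix b c assume b: "b \<in> E \<union> F" and c: "c \<in> E \<union> F"
  show "m b (dU c) = (if b = c then 1 else 0)"
  proof (cases "c \<in> E")
    case True
    then have "dU c = de c" by (simp add: dU_def)
    moreover have "m b (de c) = (if b = c then 1 else 0)"
    proof (cases "b \<in> E")
      case True then show ?thesis using frE \<open>c \<in> E\<close> unfolding frame_def by auto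
    next
      case False
      then have "b \<in> F" "b \<noteq> c" using b \<open>c \<in> E\<close> by auto
      then show ?thesis using orth'[OF Fa deg[OF \<open>c \<in> E\<close>]] by simp
    qed
    ultimately show ?thesis by simp
  next
    case False
    then have cF: "c \<in> F" using c by auto
    then have "dU c = df c" using False by (simp add: dU_def)
    moreover have "m b (df c) = (if b = c then 1 else 0)"
    proof (cases "b \<in> F")
      case True then show ?thesis using frF cF unfolding frame_def by auto
    next
      case False
      then have "b \<in> E" "b \<noteq> c" using b cF by auto
      then show ?thesis using orth[OF Eg dfa[OF cF]] by simp
    qed
    ultimately show ?thesis by simp
  qed
next
  show "UNIV \<subseteq> span (E \<union> F)"
  proof
    fix v :: 'a
    obtain x y where xy: "x \<in> g" "y \<in> a" "v = x + y" using dec by blast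
    have "x \<in> span E" "y \<in> span F" using xy frE frF unfolding frame_def by auto
    then have "x \<in> span (E \<union> F)" "y \<in> span (E \<union> F)" using span_mono[of E "E \<union> F"] span_mono[of F "E \<union> F"] by auto
    then show "v \<in> span (E \<union> F)" using xy by (simp add: span_add)
  qed
qed

lemma tr_U:
  assumes lf: "linear \<phi>"
  shows "trace_on UNIV \<phi> = (\<Sum>e\<in>E. m (\<phi> e) (de e)) + (\<Sum>f\<in>F. m (\<phi> f) (df f))"
proof -
  have "trace_on UNIV \<phi> = (\<Sum>b\<in>E \<union> F. m (\<phi> b) (dU b))"
    by (rule frame_trace[OF subspace_UNIV frU lf]) simp
  also have "\<dots> = (\<Sum>b\<in>E. m (\<phi> b) (dU b)) + (\<Sum>b\<in>F. m (\<phi> b) (dU b))"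
    by (rule sum.union_disjoint[OF finE finF EF_disj])
  also have "(\<Sum>b\<in>E. m (\<phi> b) (dU b)) = (\<Sum>e\<in>E. m (\<phi> e) (de e))"
    by (intro sum.cong refl) (simp add: dU_def)
  also have "(\<Sum>b\<in>F. m (\<phi> b) (dU b)) = (\<Sum>f\<in>F. m (\<phi> f) (df f))"
    using EF_disj by (intro sum.cong refl) (auto simp: dU_def)
  finally show ?thesis .
qed

lemma tr_g:
  assumes lf: "linear \<phi>" and fg: "\<And>v. v \<in> g \<Longrightarrow> \<phi> v \<in> g"
  shows "trace_on g \<phi> = (\<Sum>e\<in>E. m (\<phi> e) (de e))"
  by (rule frame_trace[OF sg frE lf fg])

lemma tr0:
  assumes lf: "linear f" and sh: "\<And>i y. y \<in> lower_central g br i \<Longrightarrow> f y \<in> lower_central g br (Suc i)"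
  shows "(\<Sum>e\<in>E. m (f e) (de e)) = 0"
proof -
  have fg: "f v \<in> g" if "v \<in> g" for v
    using sh[of v 0] that L_sub[of 1] by auto
  show ?thesis using tr_g[OF lf fg] trace_g0[OF lf sh] by simp
qed

abbreviation "LU \<equiv> lc_conn UNIV br m"
abbreviation "Lg \<equiv> lc_conn g br m"

lemma KU: "2 * m (LU x y) w = m (br x y) w - m (br y w) x + m (br w x) y"
  using lc_spec(2)[OF subspace_UNIV nd_U] by simp

lemma Kg: "w \<in> g \<Longrightarrow> 2 * m (Lg x y) w = m (br x y) w - m (br y w) x + m (br w x) y"
  using lc_spec(2)[OF sg nd_g] by simp

lemma Lg_in: "Lg x y \<in> g" using lc_spec(1)[OF sg nd_g] by simp

lemma N1: assumes X: "X \<in> a" shows "LU X w = 0"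
proof -
  have "m (LU X w) v = 0" for v
  proof -
    have k: "2 * m (LU X w) v = m (br X w) v - m (br w v) X + m (br v X) w" by (rule KU)
    have "m (br w v) X = 0" using orth[OF brg X] .
    moreover have "m (br v X) w = - m (br X w) v"
      using anti[of v X] sadj[OF X, of v w] sm[of v "br X w"] by simp
    ultimately show ?thesis using k by simp
  qed
  then show ?thesis using ndU by blast
qed

lemma N2: assumes Y: "Y \<in> a" shows "LU w Y = br w Y"
proof -
  have "m (LU w Y - br w Y) v = 0" for v
  proof -
    have k: "2 * m (LU w Y) v = m (br w Y) v - m (br Y v) w + m (br v w) Y" by (rule KU)
    have "m (br v w) Y = 0" using orth[OF brg Y] .
    moreover have "m (br Y v) w = - m (br w Y) v"
      using anti[of Y w] sadj[OF Y, of v w] sm[of v "br Y w"] by simp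
    ultimately show ?thesis using k by simp
  qed
  then have "LU w Y - br w Y = 0" using ndU by blast
  then show ?thesis by simp
qed

lemma N3: "w \<in> g \<Longrightarrow> m (LU x y) w = m (Lg x y) w"
  using KU[of x y w] Kg[of w x y] by simp

lemma N4: assumes X: "X \<in> a" shows "m (LU x y) X = m (br X x) y"
proof -
  have k: "2 * m (LU x y) X = m (br x y) X - m (br y X) x + m (br X x) y" by (rule KU)
  have "m (br x y) X = 0" using orth[OF brg X] .
  moreover have "m (br y X) x = - m (br X x) y"
    using anti[of y X] sadj[OF X, of y x] sm[of y "br X x"] by simp
  ultimately show ?thesis using k by simp
qed

lemma compat_g:
  assumes v: "v \<in> g" and w: "w \<in> g"
  shows "m (Lg x v) w = - m v (Lg x w)"
proof -
  have k1: "2 * m (Lg x v) w = m (br x v) w - m (br v w) x + m (br w x) v" by (rule Kg[OF w])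
  have k2: "2 * m (Lg x w) v = m (br x w) v - m (br w v) x + m (br v x) w" by (rule Kg[OF v])
  have "m (br x w) v = - m (br w x) v" "m (br w v) x = - m (br v w) x" "m (br v x) w = - m (br x v) w"
    using anti[of x w] anti[of w v] anti[of v x] by simp_all
  then have "2 * m (Lg x v) w + 2 * m (Lg x w) v = 0" using k1 k2 by simp
  then show ?thesis using sm[of v "Lg x w"] by simp
qed

lemma A_in: "LU x y - Lg x y \<in> a"
  by (rule perp_a) (simp add: N3)

end

context PIF
begin

lemma curvU: "curv UNIV br m z x y = LU z (LU x y) - LU x (LU z y) - LU (br z x) y"
  by (simp add: curv_def)

lemma LU0: "LU x 0 = 0" using linear_0[OF lc_lin2[OF subspace_UNIV nd_U]] by simp
lemma LU0': "LU 0 y = 0" using linear_0[OF lc_lin1[OF subspace_UNIV nd_U]] by simp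
lemma LU_add2: "LU x (y + z) = LU x y + LU x z" using linear_add[OF lc_lin2[OF subspace_UNIV nd_U]] by simp

lemma sadj': "X \<in> a \<Longrightarrow> m u (br X v) = m (br X u) v" using sadj by simp

lemma lin_br: "linear (br x)" by (rule br_lin_r)

lemma bil_gen: "bilinear (\<lambda>x y. m (br w y) x)" "bilinear (\<lambda>x y. m (br x y) w)"
  "bilinear (\<lambda>x y. m x (br Y (Lg u y)))" "bilinear (\<lambda>x y. m (br Y (br u y)) x)"
  "bilinear (\<lambda>x y. m (br y x) w)" "bilinear (\<lambda>x y. m (br (br Y y) x) w)"
proof -
  note l = lc_lin2[OF sg nd_g, of u]
  show "bilinear (\<lambda>x y. m (br w y) x)" "bilinear (\<lambda>x y. m (br x y) w)"
    "bilinear (\<lambda>x y. m (br Y (br u y)) x)" "bilinear (\<lambda>x y. m (br y x) w)"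
    "bilinear (\<lambda>x y. m (br (br Y y) x) w)"
    by (unfold bilinear_def, intro allI conjI linearI; simp)+
  show "bilinear (\<lambda>x y. m x (br Y (Lg u y)))"
    by (unfold bilinear_def, intro allI conjI linearI; simp add: linear_add[OF l] linear_scale[OF l])
qed

lemma sh_ad: "w \<in> g \<Longrightarrow> y \<in> lower_central g br i \<Longrightarrow> br w y \<in> lower_central g br (Suc i)"
  by (rule L_shift)

lemma sh_ad2: "w \<in> g \<Longrightarrow> y \<in> lower_central g br i \<Longrightarrow> br Y (br w y) \<in> lower_central g br (Suc i)"
  by (rule L_pres) (rule L_shift)

lemma sh_ad3: "w \<in> g \<Longrightarrow> y \<in> lower_central g br i \<Longrightarrow> br w (br Y y) \<in> lower_central g br (Suc i)"
  by (rule L_shift) (auto intro: L_pres)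

lemma tr_ad0: "w \<in> g \<Longrightarrow> (\<Sum>e\<in>E. m (br w e) (de e)) = 0"
  by (rule tr0[OF lin_br]) (rule sh_ad)

lemma tr_ad0_2: assumes w: "w \<in> g" shows "(\<Sum>e\<in>E. m (br Y (br w e)) (de e)) = 0"
proof (rule tr0)
  show "linear (\<lambda>e. br Y (br w e))" using linear_compose[OF lin_br[of w] lin_br[of Y]] by (simp add: o_def)
  show "br Y (br w y) \<in> lower_central g br (Suc i)" if "y \<in> lower_central g br i" for i y
    by (rule sh_ad2[OF w that])
qed

lemma tr_ad0_3: assumes w: "w \<in> g" shows "(\<Sum>e\<in>E. m (br w (br Y e)) (de e)) = 0"
proof (rule tr0)
  show "linear (\<lambda>e. br w (br Y e))" using linear_compose[OF lin_br[of Y] lin_br[of w]] by (simp add: o_def)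
  show "br w (br Y y) \<in> lower_central g br (Suc i)" if "y \<in> lower_central g br i" for i y
    by (rule sh_ad3[OF w that])
qed

lemma RicA:
  assumes X: "X \<in> a" and Y: "Y \<in> a"
  shows "ricci_tensor UNIV br m X Y = - trace_on UNIV (br X \<circ> br Y)"
proof -
  have c: "curv UNIV br m z X Y = - (br X \<circ> br Y) z" for z
  proof -
    have j: "br X (br Y z) + br Y (br z X) + br z (br X Y) = 0" by (rule jac)
    have "br X Y = 0" using ab X Y by simp
    moreover have "br Y (br z X) = - br (br z X) Y" by (rule anti)
    ultimately have "br X (br Y z) = br (br z X) Y" using j by simp
    then show ?thesis unfolding curvU using N1[OF X] N2[OF Y] LU0 ab[OF X Y] by simp
  qed
  have l: "linear (br X \<circ> br Y)" by (rule linear_compose[OF lin_br lin_br])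
  have "ricci_tensor UNIV br m X Y = trace_on UNIV (\<lambda>z. - (br X \<circ> br Y) z)"
    unfolding ricci_tensor_def c by simp
  also have "\<dots> = - trace_on UNIV (br X \<circ> br Y)"
    unfolding tr_U[OF l] tr_U[OF linear_compose_neg[OF l]] by (simp add: sum_negf)
  finally show ?thesis .
qed

lemma RicB:
  assumes u: "u \<in> g" and Y: "Y \<in> a"
  shows "ricci_tensor UNIV br m u Y = 0"
proof -
  define w where "w = br u Y"
  have wg: "w \<in> g" unfolding w_def by (rule brg)
  have dg: "e \<in> E \<Longrightarrow> de e \<in> g" for e by (rule deg)
  have c: "curv UNIV br m z u Y = LU z w - LU u (br z Y) - br (br z u) Y" for z
    unfolding curvU w_def using N2[OF Y] by simp
  have F0: "(\<Sum>f\<in>F. m (curv UNIV br m f u Y) (df f)) = 0"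
  proof (rule sum.neutral, rule ballI)
    fix f assume f: "f \<in> F"
    have "curv UNIV br m f u Y = - br (br f u) Y"
      unfolding c using N1[OF Fa[OF f]] ab[OF Fa[OF f] Y] LU0 by simp
    then show "m (curv UNIV br m f u Y) (df f) = 0" using orth[OF brg dfa[OF f]] by simp
  qed
  have E1: "(\<Sum>e\<in>E. m (LU e w) (de e)) = 0"
  proof -
    have "(\<Sum>e\<in>E. 2 * m (LU e w) (de e)) =
      (\<Sum>e\<in>E. m (br e w) (de e)) - (\<Sum>e\<in>E. m (br w (de e)) e) + (\<Sum>e\<in>E. m (br (de e) e) w)"
      by (simp add: KU sum.distrib sum_subtractf)
    moreover have "(\<Sum>e\<in>E. m (br e w) (de e)) = 0"
      using tr_ad0[OF wg] anti[of _ w] by (simp add: sum_negf)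
    moreover have "(\<Sum>e\<in>E. m (br w (de e)) e) = 0"
      using frame_contract_sym[OF frE bil_gen(1)[of w]] tr_ad0[OF wg] by simp
    moreover have "(\<Sum>e\<in>E. m (br (de e) e) w) = 0"
    proof -
      have "(\<Sum>e\<in>E. m (br e (de e)) w) = (\<Sum>e\<in>E. m (br (de e) e) w)"
        by (rule frame_contract_sym[OF frE bil_gen(2)])
      moreover have "(\<Sum>e\<in>E. m (br e (de e)) w) = - (\<Sum>e\<in>E. m (br (de e) e) w)"
        using anti[of _ "de _"] by (simp add: sum_negf)
      ultimately show ?thesis by simp
    qed
    ultimately have "(\<Sum>e\<in>E. 2 * m (LU e w) (de e)) = 0" by simp
    then show ?thesis by (simp add: sum_distrib_left[symmetric])
  qed
  have E2: "(\<Sum>e\<in>E. m (LU u (br e Y)) (de e)) = 0"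
  proof -
    define T where "T = (\<Sum>e\<in>E. m (br Y (Lg u e)) (de e))"
    have cs: "(\<Sum>e\<in>E. m e (br Y (Lg u (de e)))) = T"
      unfolding T_def using frame_contract_sym[OF frE bil_gen(3)[of Y u]] by (simp add: sm)
    have "(\<Sum>e\<in>E. m (LU u (br e Y)) (de e)) = (\<Sum>e\<in>E. m e (br Y (Lg u (de e))))"
    proof (rule sum.cong[OF refl])
      fix e assume e: "e \<in> E"
      have "m (LU u (br e Y)) (de e) = m (Lg u (br e Y)) (de e)" by (rule N3[OF dg[OF e]])
      also have "\<dots> = - m (br e Y) (Lg u (de e))" by (rule compat_g[OF brg dg[OF e]])
      also have "\<dots> = m (br Y e) (Lg u (de e))" using anti[of e Y] by simp
      also have "\<dots> = m e (br Y (Lg u (de e)))" by (rule sadj[OF Y])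
      finally show "m (LU u (br e Y)) (de e) = m e (br Y (Lg u (de e)))" .
    qed
    also have "\<dots> = T" by (rule cs)
    finally have eq: "(\<Sum>e\<in>E. m (LU u (br e Y)) (de e)) = T" .
    have "T = (\<Sum>e\<in>E. m (Lg u (br Y e)) (de e))"
      unfolding T_def
      using frame_cyclic[OF frE lin_br lc_lin2[OF sg nd_g] _ Lg_in, of Y u] ideal by simp
    also have "\<dots> = (\<Sum>e\<in>E. - m e (br Y (Lg u (de e))))"
    proof (rule sum.cong[OF refl])
      fix e assume e: "e \<in> E"
      have "m (Lg u (br Y e)) (de e) = - m (br Y e) (Lg u (de e))" by (rule compat_g[OF brg dg[OF e]])
      also have "\<dots> = - m e (br Y (Lg u (de e)))" using sadj[OF Y] by simp
      finally show "m (Lg u (br Y e)) (de e) = - m e (br Y (Lg u (de e)))" .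
    qed
    also have "\<dots> = - T" using cs by (simp add: sum_negf)
    finally have "T = 0" by simp
    then show ?thesis using eq by simp
  qed
  have E3: "(\<Sum>e\<in>E. m (br (br e u) Y) (de e)) = 0"
  proof -
    have "br (br e u) Y = br Y (br u e)" for e
      using anti[of "br e u" Y] anti[of e u] by simp
    then show ?thesis using tr_ad0_2[OF u, of Y] by simp
  qed
  have E: "(\<Sum>e\<in>E. m (curv UNIV br m e u Y) (de e)) =
     (\<Sum>e\<in>E. m (LU e w) (de e)) - (\<Sum>e\<in>E. m (LU u (br e Y)) (de e)) - (\<Sum>e\<in>E. m (br (br e u) Y) (de e))"
    unfolding c by (simp add: sum_subtractf)
  show ?thesis
    unfolding ricci_tensor_def tr_U[OF curv_lin1[OF subspace_UNIV nd_U]] E F0 E1 E2 E3 by simp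
qed

end

context PIF
begin

lemma RicC:
  assumes u: "u \<in> g" and Y: "Y \<in> a"
  shows "ricci_tensor UNIV br m Y u = 0"
proof -
  have dg: "e \<in> E \<Longrightarrow> de e \<in> g" for e by (rule deg)
  have c: "curv UNIV br m z Y u = - LU (br z Y) u" for z
    unfolding curvU using N1[OF Y] LU0 by simp
  have F0: "(\<Sum>f\<in>F. m (curv UNIV br m f Y u) (df f)) = 0"
  proof (rule sum.neutral, rule ballI)
    fix f assume f: "f \<in> F"
    show "m (curv UNIV br m f Y u) (df f) = 0" unfolding c using ab[OF Fa[OF f] Y] LU0' by simp
  qed
  have Sa: "(\<Sum>e\<in>E. m (br (br e Y) u) (de e)) = 0"
  proof -
    have "br (br e Y) u = br u (br Y e)" for e
      using anti[of "br e Y" u] anti[of e Y] by simp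
    then show ?thesis using tr_ad0_3[OF u, of Y] by simp
  qed
  have Sb: "(\<Sum>e\<in>E. m (br u (de e)) (br e Y)) = 0"
  proof -
    have "(\<Sum>e\<in>E. m (br u (de e)) (br e Y)) = (\<Sum>e\<in>E. - m (br Y (br u (de e))) e)"
    proof (rule sum.cong[OF refl])
      fix e assume "e \<in> E"
      have "m (br u (de e)) (br e Y) = - m (br u (de e)) (br Y e)" using anti[of e Y] by simp
      also have "\<dots> = - m (br Y (br u (de e))) e" using sadj'[OF Y] by simp
      finally show "m (br u (de e)) (br e Y) = - m (br Y (br u (de e))) e" .
    qed
    also have "\<dots> = - (\<Sum>e\<in>E. m (br Y (br u e)) (de e))"
      using frame_contract_sym[OF frE bil_gen(4)[of Y u]] by (simp add: sum_negf)
    also have "\<dots> = 0" using tr_ad0_2[OF u, of Y] by simp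
    finally show ?thesis .
  qed
  have Sc: "(\<Sum>e\<in>E. m (br (de e) (br e Y)) u) = 0"
  proof -
    define P where "P = (\<Sum>e\<in>E. m (br (de e) (br Y e)) u)"
    have mv: "(\<Sum>e\<in>E. (\<lambda>x y. m (br y x) u) (br Y e) (de e)) = (\<Sum>e\<in>E. (\<lambda>x y. m (br y x) u) e (br Y (de e)))"
    proof (rule frame_selfadj_move[OF nd_g sg frE bil_gen(5) lin_br])
      show "br Y v \<in> g" if "v \<in> g" for v using ideal that .
      show "m (br Y x) y = m x (br Y y)" for x y by (rule sadj[OF Y])
    qed
    have "P = (\<Sum>e\<in>E. m (br (br Y (de e)) e) u)"
      unfolding P_def using mv by simp
    also have "\<dots> = (\<Sum>e\<in>E. m (br (br Y e) (de e)) u)"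
      by (rule frame_contract_sym[OF frE bil_gen(6)])
    also have "\<dots> = - P" unfolding P_def using anti[of "br Y _" "de _"] by (simp add: sum_negf)
    finally have "P = 0" by simp
    moreover have "(\<Sum>e\<in>E. m (br (de e) (br e Y)) u) = - P"
      unfolding P_def using anti[of _ Y] by (simp add: sum_negf)
    ultimately show ?thesis by simp
  qed
  have E: "(\<Sum>e\<in>E. m (curv UNIV br m e Y u) (de e)) = 0"
  proof -
    have "(\<Sum>e\<in>E. 2 * m (curv UNIV br m e Y u) (de e)) =
       - ((\<Sum>e\<in>E. m (br (br e Y) u) (de e)) - (\<Sum>e\<in>E. m (br u (de e)) (br e Y)) + (\<Sum>e\<in>E. m (br (de e) (br e Y)) u))"
    proof -
      have "2 * m (curv UNIV br m e Y u) (de e) =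
        - (m (br (br e Y) u) (de e) - m (br u (de e)) (br e Y) + m (br (de e) (br e Y)) u)" if e: "e \<in> E" for e
        unfolding c using KU[of "br e Y" u "de e"] by simp
      then have "(\<Sum>e\<in>E. 2 * m (curv UNIV br m e Y u) (de e)) =
         (\<Sum>e\<in>E. - (m (br (br e Y) u) (de e) - m (br u (de e)) (br e Y) + m (br (de e) (br e Y)) u))"
        by (rule sum.cong[OF refl])
      then show ?thesis by (simp add: sum_negf sum.distrib sum_subtractf)
    qed
    then have "(\<Sum>e\<in>E. 2 * m (curv UNIV br m e Y u) (de e)) = 0" using Sa Sb Sc by simp
    then show ?thesis by (simp add: sum_distrib_left[symmetric])
  qed
  show ?thesis
    unfolding ricci_tensor_def tr_U[OF curv_lin1[OF subspace_UNIV nd_U]] E F0 by simp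
qed

lemma H_in_a:
  assumes hH: "\<And>v. m H v = trace_on UNIV (br v)"
  shows "H \<in> a"
proof (rule perp_a)
  fix w assume w: "w \<in> g"
  have "trace_on UNIV (br w) = (\<Sum>e\<in>E. m (br w e) (de e)) + (\<Sum>f\<in>F. m (br w f) (df f))"
    by (rule tr_U[OF lin_br])
  also have "(\<Sum>e\<in>E. m (br w e) (de e)) = 0" by (rule tr_ad0[OF w])
  also have "(\<Sum>f\<in>F. m (br w f) (df f)) = 0"
    by (rule sum.neutral) (use orth[OF brg dfa] in auto)
  finally show "m H w = 0" using hH by simp
qed

end

context PIF
begin

lemma RicD:
  assumes u: "u \<in> g" and v: "v \<in> g" and hH: "\<And>w. m H w = trace_on UNIV (br w)"
  shows "ricci_tensor UNIV br m u v = ricci_tensor g br m u v - m (br H u) v"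
proof -
  have Ha: "H \<in> a" by (rule H_in_a[OF hH])
  define A where "A x y = LU x y - Lg x y" for x y
  have Aa: "A x y \<in> a" for x y unfolding A_def by (rule A_in)
  have LA: "LU x y = Lg x y + A x y" for x y unfolding A_def by simp
  have pt: "m (curv UNIV br m e u v) (de e) =
      m (curv g br m e u v) (de e) + m (br e (A u v)) (de e) - m (br u (A e v)) (de e)" if e: "e \<in> E" for e
  proof -
    have dg: "de e \<in> g" by (rule deg[OF e])
    have 1: "LU e (LU u v) = LU e (Lg u v) + br e (A u v)"
      by (subst LA[of u v]) (simp add: LU_add2 N2[OF Aa])
    have 2: "LU u (LU e v) = LU u (Lg e v) + br u (A e v)"
      by (subst LA[of e v]) (simp add: LU_add2 N2[OF Aa])
    have "m (curv UNIV br m e u v) (de e) = m (LU e (Lg u v)) (de e) + m (br e (A u v)) (de e)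
       - m (LU u (Lg e v)) (de e) - m (br u (A e v)) (de e) - m (LU (br e u) v) (de e)"
      unfolding curvU 1 2 by simp
    also have "\<dots> = m (Lg e (Lg u v)) (de e) + m (br e (A u v)) (de e)
       - m (Lg u (Lg e v)) (de e) - m (br u (A e v)) (de e) - m (Lg (br e u) v) (de e)"
      using N3[OF dg] by simp
    also have "\<dots> = m (curv g br m e u v) (de e) + m (br e (A u v)) (de e) - m (br u (A e v)) (de e)"
      by (simp add: curv_def)
    finally show ?thesis .
  qed
  have T1: "(\<Sum>e\<in>E. m (br e (A u v)) (de e)) = - m (br H u) v"
  proof -
    have "(\<Sum>e\<in>E. m (br e (A u v)) (de e)) = - (\<Sum>e\<in>E. m (br (A u v) e) (de e))"
      using anti[of _ "A u v"] by (simp add: sum_negf)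
    also have "(\<Sum>e\<in>E. m (br (A u v) e) (de e)) = trace_on UNIV (br (A u v))"
    proof -
      have "(\<Sum>f\<in>F. m (br (A u v) f) (df f)) = 0"
        by (rule sum.neutral) (use ab[OF Aa Fa] in auto)
      then show ?thesis using tr_U[OF lin_br, of "A u v"] by simp
    qed
    also have "\<dots> = m (A u v) H" using hH[of "A u v"] sm[of H "A u v"] by simp
    also have "\<dots> = m (br H u) v"
      unfolding A_def using N4[OF Ha] orth[OF Lg_in Ha] by simp
    finally show ?thesis .
  qed
  have T2: "(\<Sum>e\<in>E. m (br u (A e v)) (de e)) = - (\<Sum>f\<in>F. m (br (df f) (br f u)) v)"
  proof -
    have ex: "A e v = (\<Sum>f\<in>F. m (br (df f) e) v *\<^sub>R f)" for e
    proof -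
      have "A e v = (\<Sum>f\<in>F. m (A e v) (df f) *\<^sub>R f)" using frame_exp[OF frF Aa] by simp
      also have "\<dots> = (\<Sum>f\<in>F. m (br (df f) e) v *\<^sub>R f)"
        by (intro sum.cong refl) (simp add: A_def N4[OF dfa] orth[OF Lg_in dfa])
      finally show ?thesis .
    qed
    have "(\<Sum>e\<in>E. m (br u (A e v)) (de e)) = (\<Sum>e\<in>E. - (\<Sum>f\<in>F. m (br (df f) e) v * m u (br f (de e))))"
    proof (rule sum.cong[OF refl])
      fix e assume e: "e \<in> E"
      have "m (br u (A e v)) (de e) = - m (br (A e v) u) (de e)" using anti[of u "A e v"] by simp
      also have "\<dots> = - m u (br (A e v) (de e))" using sadj[OF Aa] by simp
      also have "br (A e v) (de e) = (\<Sum>f\<in>F. m (br (df f) e) v *\<^sub>R br f (de e))"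
        unfolding ex by (simp add: linear_sum[OF br_lin_l] linear_scale[OF br_lin_l])
      finally show "m (br u (A e v)) (de e) = - (\<Sum>f\<in>F. m (br (df f) e) v * m u (br f (de e)))"
        by (simp add: m_sum_r)
    qed
    also have "\<dots> = - (\<Sum>f\<in>F. \<Sum>e\<in>E. m (br (df f) e) v * m u (br f (de e)))"
      by (simp add: sum_negf sum.swap[of _ E F])
    also have "\<dots> = - (\<Sum>f\<in>F. m (br (df f) (br f u)) v)"
    proof -
      have "(\<Sum>e\<in>E. m (br (df f) e) v * m u (br f (de e))) = m (br (df f) (br f u)) v" if f: "f \<in> F" for f
      proof -
        have "(\<Sum>e\<in>E. m (br (df f) e) v * m u (br f (de e))) = (\<Sum>e\<in>E. m (br (df f) v) e * m (de e) (br f u))"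
          by (intro sum.cong refl) (simp add: sadj[OF dfa[OF f]] sadj'[OF Fa[OF f]] sm[of e "br (df f) v" for e]
              sm[of "br f u" "de _"])
        also have "\<dots> = m (br (df f) v) (br f u)" by (rule frame_parseval[OF frE ideal[OF u]])
        also have "\<dots> = m (br (df f) (br f u)) v" using sadj[OF dfa[OF f]] sm by metis
        finally show ?thesis .
      qed
      then show ?thesis by simp
    qed
    finally show ?thesis .
  qed
  have F0: "(\<Sum>f\<in>F. m (curv UNIV br m f u v) (df f)) = - (\<Sum>f\<in>F. m (br (df f) (br f u)) v)"
  proof -
    have "m (curv UNIV br m f u v) (df f) = - m (br (df f) (br f u)) v" if f: "f \<in> F" for f
    proof -
      have "curv UNIV br m f u v = - LU (br f u) v" unfolding curvU using N1[OF Fa[OF f]] LU0 by simp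
      then show ?thesis using N4[OF dfa[OF f]] by simp
    qed
    then show ?thesis by (simp add: sum_negf)
  qed
  have "ricci_tensor UNIV br m u v = (\<Sum>e\<in>E. m (curv UNIV br m e u v) (de e)) + (\<Sum>f\<in>F. m (curv UNIV br m f u v) (df f))"
    unfolding ricci_tensor_def by (rule tr_U[OF curv_lin1[OF subspace_UNIV nd_U]])
  also have "(\<Sum>e\<in>E. m (curv UNIV br m e u v) (de e)) =
      (\<Sum>e\<in>E. m (curv g br m e u v) (de e)) + (\<Sum>e\<in>E. m (br e (A u v)) (de e)) - (\<Sum>e\<in>E. m (br u (A e v)) (de e))"
    using pt by (simp add: sum.distrib sum_subtractf)
  also have "(\<Sum>e\<in>E. m (curv g br m e u v) (de e)) = ricci_tensor g br m u v"
    by (rule ricci_frame[OF sg nd_g frE, symmetric])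
  finally show ?thesis unfolding T1 T2 F0 by simp
qed

end

context PIF
begin

lemma main:
  assumes hH: "\<forall>v. m H v = trace_on UNIV (br v)"
  shows "((\<forall>x. ricci_op UNIV br m x = lam *\<^sub>R x) \<longleftrightarrow>
           ((\<forall>x\<in>g. ricci_op g br m x = lam *\<^sub>R x + br H x) \<and>
            (\<forall>X\<in>a. \<forall>Y\<in>a. trace_on UNIV (br X \<circ> br Y) = - lam * m X Y)))
       \<and> ((\<forall>x. ricci_op UNIV br m x = lam *\<^sub>R x) \<longrightarrow>
           trace_on g (br H \<circ> br H) = - lam * trace_on g (br H))"
proof -
  have hH': "\<And>w. m H w = trace_on UNIV (br w)" using hH by blast
  have Ha: "H \<in> a" by (rule H_in_a[OF hH'])
  have EinT: "(\<forall>x. ricci_op UNIV br m x = lam *\<^sub>R x) \<longleftrightarrow> (\<forall>x y. ricci_tensor UNIV br m x y = lam * m x y)"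
    using ricci_op_iff[OF subspace_UNIV nd_U] by (auto simp: eq_commute)
  have C1: "(\<forall>x\<in>g. ricci_op g br m x = lam *\<^sub>R x + br H x) \<longleftrightarrow>
      (\<forall>x\<in>g. \<forall>y\<in>g. ricci_tensor UNIV br m x y = lam * m x y)"
  proof -
    have "ricci_op g br m x = lam *\<^sub>R x + br H x \<longleftrightarrow> (\<forall>y\<in>g. ricci_tensor UNIV br m x y = lam * m x y)"
      if x: "x \<in> g" for x
    proof -
      have r: "lam *\<^sub>R x + br H x \<in> g" using x ideal[OF x] sg by (simp add: subspace_add subspace_scale)
      have "ricci_op g br m x = lam *\<^sub>R x + br H x \<longleftrightarrow>
          (\<forall>y\<in>g. m (lam *\<^sub>R x + br H x) y = ricci_tensor g br m x y)"
        by (rule ricci_op_iff[OF sg nd_g r])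
      also have "\<dots> \<longleftrightarrow> (\<forall>y\<in>g. ricci_tensor UNIV br m x y = lam * m x y)"
        using RicD[OF x _ hH'] by auto
      finally show ?thesis .
    qed
    then show ?thesis by blast
  qed
  have C2: "(\<forall>X\<in>a. \<forall>Y\<in>a. trace_on UNIV (br X \<circ> br Y) = - lam * m X Y) \<longleftrightarrow>
      (\<forall>X\<in>a. \<forall>Y\<in>a. ricci_tensor UNIV br m X Y = lam * m X Y)"
  proof -
    have eq: "(trace_on UNIV (br X \<circ> br Y) = - lam * m X Y) = (ricci_tensor UNIV br m X Y = lam * m X Y)"
      if "X \<in> a" "Y \<in> a" for X Y using RicA[OF that] by linarith
    show ?thesis using eq by blast
  qed
  have split: "(\<forall>x y. ricci_tensor UNIV br m x y = lam * m x y) \<longleftrightarrow>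
      (\<forall>x\<in>g. \<forall>y\<in>g. ricci_tensor UNIV br m x y = lam * m x y) \<and>
      (\<forall>X\<in>a. \<forall>Y\<in>a. ricci_tensor UNIV br m X Y = lam * m X Y)"
  proof
    assume "\<forall>x y. ricci_tensor UNIV br m x y = lam * m x y"
    then show "(\<forall>x\<in>g. \<forall>y\<in>g. ricci_tensor UNIV br m x y = lam * m x y) \<and>
      (\<forall>X\<in>a. \<forall>Y\<in>a. ricci_tensor UNIV br m X Y = lam * m X Y)" by blast
  next
    assume h: "(\<forall>x\<in>g. \<forall>y\<in>g. ricci_tensor UNIV br m x y = lam * m x y) \<and>
      (\<forall>X\<in>a. \<forall>Y\<in>a. ricci_tensor UNIV br m X Y = lam * m X Y)"
    show "\<forall>x y. ricci_tensor UNIV br m x y = lam * m x y"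
    proof (intro allI)
      fix x y
      obtain u X where ux: "u \<in> g" "X \<in> a" "x = u + X" using dec by blast
      obtain v Y where vy: "v \<in> g" "Y \<in> a" "y = v + Y" using dec by blast
      note l1 = ricci_lin1[OF subspace_UNIV nd_U] and l2 = ricci_lin2[OF subspace_UNIV nd_U]
      have "ricci_tensor UNIV br m x y = ricci_tensor UNIV br m u y + ricci_tensor UNIV br m X y"
        unfolding ux(3) by (rule linear_add[OF l1])
      also have "ricci_tensor UNIV br m u y = ricci_tensor UNIV br m u v + ricci_tensor UNIV br m u Y"
        unfolding vy(3) by (rule linear_add[OF l2])
      also have "ricci_tensor UNIV br m X y = ricci_tensor UNIV br m X v + ricci_tensor UNIV br m X Y"
        unfolding vy(3) by (rule linear_add[OF l2])
      finally have "ricci_tensor UNIV br m x y = lam * m u v + lam * m X Y"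
        using h ux vy RicB[OF ux(1) vy(2)] RicC[OF vy(1) ux(2)] by simp
      moreover have "m x y = m u v + m X Y"
        using ux vy orth[OF ux(1) vy(2)] orth'[OF ux(2) vy(1)] by simp
      ultimately show "ricci_tensor UNIV br m x y = lam * m x y" by (simp add: algebra_simps)
    qed
  qed
  have part1: "(\<forall>x. ricci_op UNIV br m x = lam *\<^sub>R x) \<longleftrightarrow>
           ((\<forall>x\<in>g. ricci_op g br m x = lam *\<^sub>R x + br H x) \<and>
            (\<forall>X\<in>a. \<forall>Y\<in>a. trace_on UNIV (br X \<circ> br Y) = - lam * m X Y))"
    unfolding EinT split C1 C2 ..
  have part2: "trace_on g (br H \<circ> br H) = - lam * trace_on g (br H)"
    if ein: "\<forall>x. ricci_op UNIV br m x = lam *\<^sub>R x"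
  proof -
    have t: "trace_on UNIV (br H \<circ> br H) = - lam * m H H" using part1 ein Ha by blast
    have lHH: "linear (br H \<circ> br H)" by (rule linear_compose[OF lin_br lin_br])
    have F1: "(\<Sum>f\<in>F. m ((br H \<circ> br H) f) (df f)) = 0" "(\<Sum>f\<in>F. m (br H f) (df f)) = 0"
      using ab[OF Ha Fa] by simp_all
    have "trace_on g (br H \<circ> br H) = trace_on UNIV (br H \<circ> br H)"
      using tr_g[OF lHH] tr_U[OF lHH] F1 ideal by simp
    moreover have "trace_on g (br H) = trace_on UNIV (br H)"
      using tr_g[OF lin_br] tr_U[OF lin_br] F1 ideal by simp
    moreover have "m H H = trace_on UNIV (br H)" by (rule hH')
    ultimately show ?thesis using t by simp
  qed
  show ?thesis using part1 part2 by blast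
qed

end

theorem theorem3p9:
  fixes br :: "'a::euclidean_space \<Rightarrow> 'a \<Rightarrow> 'a"
    and m :: "'a \<Rightarrow> 'a \<Rightarrow> real"
    and g a :: "'a set" and H :: 'a and lam :: real
  assumes "lie_algebra br" and "solvable br" and "metric m"
    and "pseudo_iwasawa br m g a"
    and H: "\<forall>v. m H v = trace_on UNIV (br v)"
  shows "((\<forall>x. ricci_op UNIV br m x = lam *\<^sub>R x) \<longleftrightarrow>
           ((\<forall>x\<in>g. ricci_op g br m x = lam *\<^sub>R x + br H x) \<and>
            (\<forall>X\<in>a. \<forall>Y\<in>a. trace_on UNIV (br X \<circ> br Y) = - lam * m X Y)))
       \<and> ((\<forall>x. ricci_op UNIV br m x = lam *\<^sub>R x) \<longrightarrow>
           trace_on g (br H \<circ> br H) = - lam * trace_on g (br H))"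
proof -
  interpret PI m br g a
  proof
    show "bilinear m" "\<And>x y. m x y = m y x" "\<And>x. (\<forall>y. m x y = 0) \<Longrightarrow> x = 0"
      using assms(3) unfolding metric_def by blast+
    show "bilinear br" "\<And>x y. br x y = - br y x"
      "\<And>x y z. br x (br y z) + br y (br z x) + br z (br x y) = 0"
      using assms(1) unfolding lie_algebra_def by blast+
    show "subspace g" "\<And>x y. y \<in> g \<Longrightarrow> br x y \<in> g" "nilpotent_on g br" "subspace a"
      "\<And>X Y. X \<in> a \<Longrightarrow> Y \<in> a \<Longrightarrow> br X Y = 0" "g \<inter> a = {0}" "\<And>v. \<exists>x\<in>g. \<exists>y\<in>a. v = x + y"
      "\<And>x y. x \<in> g \<Longrightarrow> y \<in> a \<Longrightarrow> m x y = 0" "\<And>X u v. X \<in> a \<Longrightarrow> m (br X u) v = m u (br X v)"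
      using assms(4) unfolding pseudo_iwasawa_def standard_decomposition_def lie_ideal_def
        abelian_subalgebra_def by blast+
  qed
  obtain E de where frE: "frame m g E de" using frame_exists[OF nd_g sg] by blast
  obtain F df where frF: "frame m a F df" using frame_exists[OF nd_a sa] by blast
  interpret PIF m br g a E F de df
    by unfold_locales (rule frE, rule frF)
  show ?thesis by (rule main[OF H])
qed

end
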